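(* Let $q\ge2$, let $r$ be a positive integer, and let $f$ be a positive function on the nonnegative integers that is $q$-quasimultiplicative with parameter $r$ (i.e. $f(q^{k+r}a+b)=f(a)f(b)$ for all $a,b,k\ge0$ with $0\le b<q^k$) and has at most polynomial growth ($f(n)=O(n^c)$ and $f(n)=\Omega(n^{-c})$ for a fixed $c\ge0$). Let $\mathcal{B}$, $\ell$, $B(x,t)=\sum_{n\in\mathcal{B}}x^{\ell(n)}f(n)^t$ and $F(x,t)=\sum_{k\ge0}x^k\sum_{0\le n<q^k}f(n)^t$ be as in the context. Then there exist positive constants $\delta,\epsilon$ and functions $\alpha,\kappa$, analytic for $|t|\le\delta$ with $\kappa(t)\ne0$ there, such that for $|t|\le\delta$, $\alpha(t)$ is a solution of $x+x^rB(x,t)=1$ of modulus less than the radius of convergence of $B(\cdot,t)$, this equation has no other solutions of modulus $\le(1+\epsilon)|\alpha(t)|$, and $$[x^k]F(x,t)=\kappa(t)\,\alpha(t)^{-k}\bigl(1+O((1+\epsilon)^{-k})\bigr)$$ uniformly in $t$ with $|t|\le\delta$.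
   Context: $\mathcal{B}$ is the set of positive integers not divisible by $q$ whose $q$-ary representation (without leading zeros) does not contain the block $0^r$ of $r$ consecutive zeros; $\ell(n)$ is the length of the $q$-ary representation of $n$; for complex $t$, $f(n)^t=e^{t\log f(n)}$; $[x^k]$ denotes the coefficient of $x^k$. *)

theory Defs
  imports "HOL-Analysis.Analysis" "HOL-Library.Landau_Symbols"
begin

text \<open>Length of the q-ary representation of n (0 has the empty representation).\<close>
definition qlen :: "nat \<Rightarrow> nat \<Rightarrow> nat" where
  "qlen q n = (LEAST k. n < q ^ k)"

definition qdigit :: "nat \<Rightarrow> nat \<Rightarrow> nat \<Rightarrow> nat" where
  "qdigit q n i = n div q ^ i mod q"

definition has_zero_block :: "nat \<Rightarrow> nat \<Rightarrow> nat \<Rightarrow> bool" where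
  "has_zero_block q r n = (\<exists>j. j + r \<le> qlen q n \<and> (\<forall>i<r. qdigit q n (j + i) = 0))"

definition Bset :: "nat \<Rightarrow> nat \<Rightarrow> nat set" where
  "Bset q r = {n. 0 < n \<and> \<not> q dvd n \<and> \<not> has_zero_block q r n}"

definition quasimult :: "nat \<Rightarrow> nat \<Rightarrow> (nat \<Rightarrow> real) \<Rightarrow> bool" where
  "quasimult q r f = (\<forall>a b k. b < q ^ k \<longrightarrow> f (q ^ (k + r) * a + b) = f a * f b)"

definition fpow :: "(nat \<Rightarrow> real) \<Rightarrow> nat \<Rightarrow> complex \<Rightarrow> complex" where
  "fpow f n t = exp (t * of_real (ln (f n)))"

text \<open>Coefficient of x^k in B(x,t) = sum over n in B of x^l(n) f(n)^t.\<close>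
definition Bcoef :: "nat \<Rightarrow> nat \<Rightarrow> (nat \<Rightarrow> real) \<Rightarrow> complex \<Rightarrow> nat \<Rightarrow> complex" where
  "Bcoef q r f t k = (\<Sum>n \<in> {n \<in> Bset q r. qlen q n = k}. fpow f n t)"

definition Bfun :: "nat \<Rightarrow> nat \<Rightarrow> (nat \<Rightarrow> real) \<Rightarrow> complex \<Rightarrow> complex \<Rightarrow> complex" where
  "Bfun q r f x t = (\<Sum>k. Bcoef q r f t k * x ^ k)"

definition Fcoef :: "nat \<Rightarrow> (nat \<Rightarrow> real) \<Rightarrow> complex \<Rightarrow> nat \<Rightarrow> complex" where
  "Fcoef q f t k = (\<Sum>n<q ^ k. fpow f n t)"

end

theory Submission
  imports Defs "HOL-Complex_Analysis.Complex_Analysis"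
begin


lemma digits_zero_iff_dvd:
  fixes q x :: nat assumes "q > 0"
  shows "(\<forall>i<r. x div q^i mod q = 0) \<longleftrightarrow> q^r dvd x"
proof (induction r)
  case 0 then show ?case by simp
next
  case (Suc r)
  have "(\<forall>i<Suc r. x div q^i mod q = 0) \<longleftrightarrow> (\<forall>i<r. x div q^i mod q = 0) \<and> x div q^r mod q = 0"
    using less_Suc_eq by auto
  also have "\<dots> \<longleftrightarrow> q^r dvd x \<and> q dvd x div q^r" using Suc by (simp add: dvd_eq_mod_eq_0)
  also have "\<dots> \<longleftrightarrow> q^Suc r dvd x"
  proof
    assume h: "q^r dvd x \<and> q dvd x div q^r"
    then obtain y where y: "x = q^r * y" by blast
    with h assms have "q dvd y" by simp
    then show "q^Suc r dvd x" using y by (simp add: mult_dvd_mono)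
  next
    assume h: "q^Suc r dvd x"
    then obtain y where y: "x = q^Suc r * y" by blast
    then show "q^r dvd x \<and> q dvd x div q^r" using assms by (simp add: mult.assoc)
  qed
  finally show ?case .
qed

lemma dvd_pow_digit: "q > 0 \<Longrightarrow> q^r dvd (x::nat) \<Longrightarrow> i < r \<Longrightarrow> x div q^i mod q = 0"
  using digits_zero_iff_dvd by blast

lemma hzb_iff: "q > 0 \<Longrightarrow> has_zero_block q r n \<longleftrightarrow> (\<exists>j. j + r \<le> qlen q n \<and> q^r dvd n div q^j)"
proof -
  assume q: "q > 0"
  have "\<And>j. (\<forall>i<r. qdigit q n (j+i) = 0) \<longleftrightarrow> q^r dvd n div q^j"
    unfolding qdigit_def using digits_zero_iff_dvd[OF q, of r] by (simp add: power_add div_mult2_eq)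
  thus ?thesis unfolding has_zero_block_def by simp
qed

locale qr = fixes q r :: nat assumes q2: "q \<ge> 2" and r1: "r \<ge> 1"
begin

lemma qpos: "q > 0" using q2 by simp

lemma pow_lt_mono: "b < q^m \<Longrightarrow> m \<le> M \<Longrightarrow> b < q^M"
  using power_increasing[of m M q] q2 by (meson less_le_trans one_le_numeral order_trans)

lemma n_less_qpow: "n < q^n"
proof -
  have "n < 2^n" by (rule less_exp)
  also have "\<dots> \<le> q^n" using q2 by (simp add: power_mono)
  finally show ?thesis .
qed

lemma qlen_less: "n < q^(qlen q n)"
  unfolding qlen_def by (rule LeastI[of _ n]) (rule n_less_qpow)

lemma qlen_le: "n < q^k \<Longrightarrow> qlen q n \<le> k"
  unfolding qlen_def by (rule Least_le)

lemma qlen_eqI: assumes "k \<ge> 1" "q^(k-1) \<le> n" "n < q^k" shows "qlen q n = k"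
proof -
  have "qlen q n \<le> k" using assms by (intro qlen_le)
  moreover have "\<not> qlen q n \<le> k - 1"
  proof
    assume "qlen q n \<le> k - 1"
    hence "q^(qlen q n) \<le> q^(k-1)" using q2 by (intro power_increasing) auto
    with qlen_less[of n] assms show False by linarith
  qed
  ultimately show ?thesis by linarith
qed

lemma qlen_0 [simp]: "qlen q 0 = 0"
  using qlen_le[of 0 0] by simp

lemma qlen_ge: assumes "n > 0" shows "qlen q n \<ge> 1" "q^(qlen q n - 1) \<le> n"
proof -
  show 1: "qlen q n \<ge> 1"
  proof (rule ccontr)
    assume "\<not> qlen q n \<ge> 1" hence "qlen q n = 0" by simp
    with qlen_less[of n] assms show False by simp
  qed
  show "q^(qlen q n - 1) \<le> n"
  proof (rule ccontr)
    assume "\<not> q^(qlen q n - 1) \<le> n"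
    hence "qlen q n \<le> qlen q n - 1" by (intro qlen_le) simp
    with 1 show False by simp
  qed
qed

lemma qlen_iff: "k \<ge> 1 \<Longrightarrow> qlen q n = k \<longleftrightarrow> q^(k-1) \<le> n \<and> n < q^k"
proof
  assume "k \<ge> 1" "qlen q n = k"
  moreover from this have "n > 0" by (cases "n = 0") auto
  ultimately show "q^(k-1) \<le> n \<and> n < q^k" using qlen_ge[of n] qlen_less[of n] by auto
qed (auto intro: qlen_eqI)

lemma qlen_shift: assumes "a > 0" "b < q^s" shows "qlen q (q^s * a + b) = s + qlen q a"
proof -
  let ?l = "qlen q a"
  have l1: "?l \<ge> 1" and la: "q^(?l - 1) \<le> a" using qlen_ge assms by auto
  have au: "a + 1 \<le> q^?l" using qlen_less[of a] by simp
  have "q^(s + ?l - 1) = q^s * q^(?l - 1)" using l1 by (simp add: power_add[symmetric])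
  also have "\<dots> \<le> q^s * a" using la by simp
  finally have lo: "q^(s + ?l - 1) \<le> q^s * a + b" by linarith
  have "q^s * a + b < q^s * a + q^s" using assms by simp
  also have "\<dots> = q^s * (a + 1)" by simp
  also have "\<dots> \<le> q^s * q^?l" using au mult_le_mono2 by blast
  finally have hi: "q^s * a + b < q^(s + ?l)" by (simp add: power_add)
  show ?thesis using lo hi l1 by (intro qlen_eqI) auto
qed

definition Bl :: "nat \<Rightarrow> nat set" where "Bl l = {a \<in> Bset q r. qlen q a = l}"

lemma Bl_sub: "Bl l \<subseteq> {..<q^l}"
  unfolding Bl_def using qlen_less by auto

lemma finite_Bl [simp]: "finite (Bl l)"
  using Bl_sub finite_subset by blast

lemma Bl_0 [simp]: "Bl 0 = {}"
proof -
  have "a \<notin> Bl 0" for a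
  proof
    assume "a \<in> Bl 0"
    hence "a > 0" "qlen q a = 0" unfolding Bl_def Bset_def by auto
    with qlen_ge(1)[of a] show False by simp
  qed
  thus ?thesis by blast
qed

lemma Bset_iff: "a \<in> Bset q r \<longleftrightarrow> a > 0 \<and> \<not> q dvd a \<and> \<not>(\<exists>j. j + r \<le> qlen q a \<and> q^r dvd a div q^j)"
  by (simp only: Bset_def mem_Collect_eq hzb_iff[OF qpos])

lemma div_shift: assumes "b < q^m" shows "(q^(m+r) * a + b) div q^(m+r) = a"
proof -
  have "b < q^(m+r)" using assms by (rule pow_lt_mono) simp
  thus ?thesis using qpos by simp
qed

lemma block_in_canon:
  assumes a: "a \<in> Bset q r" and b: "b < q^m" and n: "n = q^(m+r) * a + b"
    and blk: "q^r dvd n div q^p" and pk: "p + r \<le> qlen q n"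
  shows "p \<le> m"
proof (rule ccontr)
  assume "\<not> p \<le> m" hence pm: "p > m" by simp
  have apos: "a > 0" and anq: "\<not> q dvd a" and anb: "\<not>(\<exists>j. j + r \<le> qlen q a \<and> q^r dvd a div q^j)"
    using a Bset_iff by auto
  have nd: "n div q^(m+r) = a" using div_shift[OF b] n by simp
  have bmr: "b < q^(m+r)" using b by (rule pow_lt_mono) simp
  have ql: "qlen q n = m + r + qlen q a"
    using qlen_shift[OF apos bmr] n by simp
  show False
  proof (cases "p \<ge> m + r")
    case True
    have "q^p = q^(m+r) * q^(p-(m+r))" using True by (simp add: power_add[symmetric])
    hence "n div q^p = a div q^(p - (m+r))"
      using nd by (simp add: div_mult2_eq)
    hence "q^r dvd a div q^(p - (m+r))" using blk by simp
    moreover have "p - (m+r) + r \<le> qlen q a" using pk ql True by linarith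
    ultimately show False using anb by blast
  next
    case False
    have "(n div q^p) div q^(m + r - p) mod q = 0"
      using dvd_pow_digit[OF qpos blk] False pm by simp
    moreover have "(n div q^p) div q^(m + r - p) = n div q^(m+r)"
      using False pm by (metis div_mult2_eq le_add_diff_inverse less_or_eq_imp_le not_le power_add)
    ultimately have "a mod q = 0" using nd by simp
    with anq show False by (simp add: dvd_eq_mod_eq_0)
  qed
qed

end

context qr begin

lemma block_in_pow:
  assumes a: "a \<in> Bset q r" and j: "j < r" and n: "n = q^j * a"
    and blk: "q^r dvd n div q^p" and pk: "p + r \<le> qlen q n"
  shows False
proof -
  have apos: "a > 0" and anq: "\<not> q dvd a" and anb: "\<not>(\<exists>i. i + r \<le> qlen q a \<and> q^r dvd a div q^i)"
    using a Bset_iff by auto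
  have ql: "qlen q n = j + qlen q a" using qlen_shift[OF apos, of 0 j] n qpos by simp
  show False
  proof (cases "p \<ge> j")
    case True
    have "q^p = q^j * q^(p-j)" using True by (simp add: power_add[symmetric])
    hence "n div q^p = a div q^(p - j)" using n qpos by (simp add: div_mult2_eq)
    hence "q^r dvd a div q^(p - j)" using blk by simp
    moreover have "p - j + r \<le> qlen q a" using pk ql True by linarith
    ultimately show False using anb by blast
  next
    case False
    have "(n div q^p) div q^(j - p) mod q = 0"
      using dvd_pow_digit[OF qpos blk] False j by simp
    moreover have "q^j = q^p * q^(j - p)" using False by (simp add: power_add[symmetric])
    hence "(n div q^p) div q^(j - p) = a" using n qpos by (simp add: div_mult2_eq[symmetric])
    ultimately have "a mod q = 0" by simp
    with anq show False by (simp add: dvd_eq_mod_eq_0)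
  qed
qed

definition blocks :: "nat \<Rightarrow> nat \<Rightarrow> nat set" where
  "blocks k n = {p. p + r \<le> k \<and> q^r dvd n div q^p}"

lemma finite_blocks: "finite (blocks k n)"
  unfolding blocks_def by (rule finite_subset[of _ "{..k}"]) auto

lemma canon_props:
  assumes m: "m + r \<le> k" and a: "a \<in> Bl (k - m - r)" and b: "b < q^m"
  shows "qlen q (q^(m+r) * a + b) = k" "m \<in> blocks k (q^(m+r) * a + b)"
    "Max (blocks k (q^(m+r) * a + b)) = m"
proof -
  let ?n = "q^(m+r) * a + b"
  have aB: "a \<in> Bset q r" and al: "qlen q a = k - m - r" using a unfolding Bl_def by auto
  have apos: "a > 0" using aB Bset_iff by auto
  have bmr: "b < q^(m+r)" using b by (rule pow_lt_mono) simp
  show ql: "qlen q ?n = k" using qlen_shift[OF apos bmr] al m apos qlen_ge(1)[OF apos] by simp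
  have "q^(m+r) = q^m * q^r" by (simp add: power_add)
  hence "?n div q^m = q^r * a" using b qpos by (simp add: mult.assoc)
  thus mb: "m \<in> blocks k ?n" unfolding blocks_def using m by simp
  have "\<forall>p\<in>blocks k ?n. p \<le> m"
    using block_in_canon[OF aB b refl] ql unfolding blocks_def by auto
  thus "Max (blocks k ?n) = m" using mb finite_blocks by (intro Max_eqI) auto
qed

lemma canon_exists:
  assumes k: "k \<ge> 1" and n1: "q^(k-1) \<le> n" and n2: "n < q^k" and ne: "blocks k n \<noteq> {}"
  defines "m \<equiv> Max (blocks k n)"
  shows "m + r \<le> k" "n div q^(m+r) \<in> Bl (k - m - r)" "n mod q^m < q^m"
    "n = q^(m+r) * (n div q^(m+r)) + n mod q^m"
proof -
  have mB: "m \<in> blocks k n" unfolding m_def using finite_blocks ne by (rule Max_in)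
  have mmax: "\<And>p. p \<in> blocks k n \<Longrightarrow> p \<le> m" unfolding m_def using finite_blocks by simp
  show mr: "m + r \<le> k" using mB unfolding blocks_def by simp
  have dv: "q^r dvd n div q^m" using mB unfolding blocks_def by simp
  show "n mod q^m < q^m" using qpos by simp
  define a where "a = n div q^(m+r)"
  have qmr: "q^(m+r) = q^m * q^r" by (simp add: power_add)
  have nmod: "n mod q^(m+r) = n mod q^m"
    using dv qmr by (simp add: mod_mult2_eq dvd_eq_mod_eq_0)
  show nrep: "n = q^(m+r) * (n div q^(m+r)) + n mod q^m"
    using nmod by (metis div_mult_mod_eq mult.commute)
  have adiv: "n div q^m = q^r * a" using dv qmr unfolding a_def by (simp add: div_mult2_eq)
  have apos: "a > 0"
  proof (rule ccontr)
    assume "\<not> a > 0" hence "a = 0" by simp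
    hence "n < q^m" using nrep qpos a_def by (metis add_0 mod_less_divisor mult_0_right power_eq_0_iff not_gr0)
    moreover have "q^m \<le> q^(k-1)" using mr r1 q2 by (intro power_increasing) auto
    ultimately show False using n1 by simp
  qed
  have ql: "qlen q n = m + r + qlen q a"
    using qlen_shift[OF apos, of "n mod q^m" "m+r"] nrep qpos a_def
    by (metis pow_lt_mono le_add1 mod_less_divisor zero_less_power)
  have qn: "qlen q n = k" using k n1 n2 by (intro qlen_eqI)
  have al: "qlen q a = k - m - r" using ql qn by simp
  have anq: "\<not> q dvd a"
  proof
    assume "q dvd a"
    then obtain z where z: "a = q * z" by blast
    have "a \<ge> q" using apos z by (cases z) auto
    hence "\<not> a < q^1" by simp
    hence "qlen q a \<ge> 2"
    proof -
      have "qlen q a \<ge> 1" using qlen_ge(1)[OF apos] .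
      moreover have "qlen q a \<noteq> 1" using qlen_less[of a] \<open>a \<ge> q\<close> by (metis not_less power_one_right)
      ultimately show ?thesis by simp
    qed
    hence "m + 1 + r \<le> k" using al mr by simp
    moreover have "q^r dvd n div q^(m+1)"
    proof -
      have "n div q^(m+1) = (n div q^m) div q" by (simp add: div_mult2_eq[symmetric] mult.commute)
      also have "\<dots> = q^r * z" using adiv z qpos by (simp add: mult.left_commute)
      finally show ?thesis by simp
    qed
    ultimately have "m + 1 \<in> blocks k n" unfolding blocks_def by simp
    with mmax show False by fastforce
  qed
  have anb: "\<not>(\<exists>j. j + r \<le> qlen q a \<and> q^r dvd a div q^j)"
  proof
    assume "\<exists>j. j + r \<le> qlen q a \<and> q^r dvd a div q^j"
    then obtain j where j: "j + r \<le> qlen q a" "q^r dvd a div q^j" by blast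
    have "q^(m+r+j) = q^(m+r) * q^j" by (simp add: power_add)
    hence "n div q^(m+r+j) = a div q^j" unfolding a_def by (simp add: div_mult2_eq)
    hence "m + r + j \<in> blocks k n" using j al mr unfolding blocks_def by simp
    with mmax r1 show False by fastforce
  qed
  show "n div q^(m+r) \<in> Bl (k - m - r)"
    using apos anq anb al unfolding Bl_def a_def[symmetric] Bset_iff by simp
qed

end

context qr begin

lemma pow_exists:
  assumes k: "k \<ge> 1" and n1: "q^(k-1) \<le> n" and n2: "n < q^k" and ne: "blocks k n = {}"
  defines "j \<equiv> multiplicity q n"
  shows "j < r" "n div q^j \<in> Bl (k - j)" "n = q^j * (n div q^j)"
proof -
  have npos: "n > 0" using n1 qpos by (metis gr0I le_zero_eq power_not_zero)
  have nu: "\<not> is_unit q" using q2 by simp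
  have dv: "q^j dvd n" unfolding j_def by (rule multiplicity_dvd)
  show nrep: "n = q^j * (n div q^j)" using dv by simp
  define a where "a = n div q^j"
  have anq: "\<not> q dvd a" unfolding a_def j_def using multiplicity_decompose[of n q] npos nu by simp
  have apos: "a > 0" using npos nrep a_def by (metis gr0I mult_0_right)
  have qn: "qlen q n = k" using k n1 n2 by (intro qlen_eqI)
  have ql: "qlen q n = j + qlen q a" using qlen_shift[OF apos, of 0 j] nrep a_def qpos by simp
  show jr: "j < r"
  proof (rule ccontr)
    assume "\<not> j < r"
    hence "q^r dvd n" using dv by (meson dvd_trans le_imp_power_dvd not_less)
    moreover have "r \<le> k"
    proof -
      have "q^r \<le> n" using \<open>q^r dvd n\<close> npos by (simp add: dvd_imp_le)
      hence "q^r < q^k" using n2 by simp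
      thus ?thesis using q2 by (simp add: power_strict_increasing_iff)
    qed
    ultimately have "0 \<in> blocks k n" unfolding blocks_def by simp
    with ne show False by simp
  qed
  have anb: "\<not>(\<exists>i. i + r \<le> qlen q a \<and> q^r dvd a div q^i)"
  proof
    assume "\<exists>i. i + r \<le> qlen q a \<and> q^r dvd a div q^i"
    then obtain i where i: "i + r \<le> qlen q a" "q^r dvd a div q^i" by blast
    have "q^(j+i) = q^j * q^i" by (simp add: power_add)
    hence "n div q^(j+i) = a div q^i" unfolding a_def by (simp add: div_mult2_eq)
    hence "j + i \<in> blocks k n" using i ql qn unfolding blocks_def by simp
    with ne show False by simp
  qed
  show "n div q^j \<in> Bl (k - j)"
    using apos anq anb ql qn unfolding Bl_def a_def[symmetric] Bset_iff by simp
qed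

lemma pow_props:
  assumes j: "j < r" and a: "a \<in> Bl (k - j)" and k: "k \<ge> 1"
  shows "qlen q (q^j * a) = k" "blocks k (q^j * a) = {}"
proof -
  have aB: "a \<in> Bset q r" and al: "qlen q a = k - j" using a unfolding Bl_def by auto
  have apos: "a > 0" using aB Bset_iff by auto
  have "qlen q a \<ge> 1" using qlen_ge(1)[OF apos] .
  show ql: "qlen q (q^j * a) = k" using qlen_shift[OF apos, of 0 j] qpos al \<open>qlen q a \<ge> 1\<close> by simp
  show "blocks k (q^j * a) = {}"
    using block_in_pow[OF aB j refl] ql unfolding blocks_def by auto
qed

lemma sum_top:
  fixes g :: "nat \<Rightarrow> 'a::comm_monoid_add"
  assumes k: "k \<ge> 1"
  shows "(\<Sum>n\<in>{q^(k-1)..<q^k}. g n) =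
    (\<Sum>m\<in>{m. m + r \<le> k}. \<Sum>a\<in>Bl(k-m-r). \<Sum>b<q^m. g (q^(m+r)*a+b)) +
    (\<Sum>j<r. \<Sum>a\<in>Bl(k-j). g (q^j*a))"
proof -
  define A where "A = {q^(k-1)..<q^k}"
  define A1 where "A1 = {n\<in>A. blocks k n \<noteq> {}}"
  define A2 where "A2 = {n\<in>A. blocks k n = {}}"
  define S1 where "S1 = Sigma {m. m + r \<le> k} (\<lambda>m. Bl(k-m-r) \<times> {..<q^m})"
  define h1 where "h1 = (\<lambda>(m::nat,(a::nat,b::nat)). q^(m+r)*a+b)"
  define S2 where "S2 = Sigma {..<r} (\<lambda>j. Bl(k-j))"
  define h2 where "h2 = (\<lambda>(j::nat,a::nat). q^j*a)"
  have finM: "finite {m. m + r \<le> k}" by (rule finite_subset[of _ "{..k}"]) auto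
  have bij1: "bij_betw h1 S1 A1"
    unfolding bij_betw_def
  proof
    show "inj_on h1 S1"
    proof (rule inj_onI)
      fix x y assume x: "x \<in> S1" and y: "y \<in> S1" and e: "h1 x = h1 y"
      obtain m a b where xe: "x = (m,(a,b))" by (cases x) auto
      obtain m' a' b' where ye: "y = (m',(a',b'))" by (cases y) auto
      have hx: "m + r \<le> k" "a \<in> Bl(k-m-r)" "b < q^m" using x xe unfolding S1_def by auto
      have hy: "m' + r \<le> k" "a' \<in> Bl(k-m'-r)" "b' < q^m'" using y ye unfolding S1_def by auto
      have en: "q^(m+r)*a+b = q^(m'+r)*a'+b'" using e xe ye unfolding h1_def by simp
      have "m = m'" using canon_props(3)[OF hx] canon_props(3)[OF hy] en by simp
      moreover have "a = a'" using div_shift[OF hx(3), of a] div_shift[OF hy(3), of a'] en \<open>m = m'\<close> by simp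
      moreover have "b = b'"
      proof -
        have "(q^(m+r)*a+b) mod q^m = b" using hx(3) by (simp add: power_add mod_mult_self3 mult.assoc)
        moreover have "(q^(m'+r)*a'+b') mod q^m' = b'" using hy(3) by (simp add: power_add mod_mult_self3 mult.assoc)
        ultimately show ?thesis using en \<open>m = m'\<close> by simp
      qed
      ultimately show "x = y" using xe ye by simp
    qed
    show "h1 ` S1 = A1"
    proof
      show "h1 ` S1 \<subseteq> A1"
      proof
        fix n assume "n \<in> h1 ` S1"
        then obtain m a b where h: "m + r \<le> k" "a \<in> Bl(k-m-r)" "b < q^m" and n: "n = q^(m+r)*a+b"
          unfolding S1_def h1_def by auto
        have "qlen q n = k" "blocks k n \<noteq> {}" using canon_props(1,2)[OF h] n by auto
        thus "n \<in> A1" unfolding A1_def A_def using qlen_iff[OF k] by auto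
      qed
      show "A1 \<subseteq> h1 ` S1"
      proof
        fix n assume "n \<in> A1"
        hence n: "q^(k-1) \<le> n" "n < q^k" "blocks k n \<noteq> {}" unfolding A1_def A_def by auto
        note ce = canon_exists[OF k n]
        let ?m = "Max (blocks k n)"
        have "(?m, (n div q^(?m+r), n mod q^?m)) \<in> S1" unfolding S1_def using ce by auto
        moreover have "h1 (?m, (n div q^(?m+r), n mod q^?m)) = n" unfolding h1_def using ce(4) by simp
        ultimately show "n \<in> h1 ` S1" by (metis image_eqI)
      qed
    qed
  qed
  have bij2: "bij_betw h2 S2 A2"
    unfolding bij_betw_def
  proof
    show "inj_on h2 S2"
    proof (rule inj_onI)
      fix x y assume x: "x \<in> S2" and y: "y \<in> S2" and e: "h2 x = h2 y"
      obtain j a where xe: "x = (j,a)" by (cases x) auto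
      obtain j' a' where ye: "y = (j',a')" by (cases y) auto
      have "a \<in> Bset q r" "a' \<in> Bset q r" using x y xe ye unfolding S2_def Bl_def by auto
      hence anq: "\<not> q dvd a" "\<not> q dvd a'" using Bset_iff by auto
      have en: "q^j*a = q^j'*a'" using e xe ye unfolding h2_def by simp
      have "j = j'"
      proof (rule ccontr)
        assume "j \<noteq> j'"
        then consider "j < j'" | "j' < j" by linarith
        then show False
        proof cases
          case 1
          have "q^j' = q^j * q^(j'-j)" using 1 by (simp add: power_add[symmetric])
          hence "a = q^(j'-j) * a'" using en qpos by simp
          moreover have "q dvd q^(j'-j)" using 1 by simp
          ultimately show False using anq by simp
        next
          case 2
          have "q^j = q^j' * q^(j-j')" using 2 by (simp add: power_add[symmetric])
          hence "a' = q^(j-j') * a" using en qpos by simp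
          moreover have "q dvd q^(j-j')" using 2 by simp
          ultimately show False using anq by simp
        qed
      qed
      moreover have "a = a'" using en \<open>j = j'\<close> qpos by simp
      ultimately show "x = y" using xe ye by simp
    qed
    show "h2 ` S2 = A2"
    proof
      show "h2 ` S2 \<subseteq> A2"
      proof
        fix n assume "n \<in> h2 ` S2"
        then obtain j a where h: "j < r" "a \<in> Bl(k-j)" and n: "n = q^j*a"
          unfolding S2_def h2_def by auto
        have "qlen q n = k" "blocks k n = {}" using pow_props[OF h k] n by auto
        thus "n \<in> A2" unfolding A2_def A_def using qlen_iff[OF k] by auto
      qed
      show "A2 \<subseteq> h2 ` S2"
      proof
        fix n assume "n \<in> A2"
        hence n: "q^(k-1) \<le> n" "n < q^k" "blocks k n = {}" unfolding A2_def A_def by auto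
        note pe = pow_exists[OF k n]
        let ?j = "multiplicity q n"
        have "(?j, n div q^?j) \<in> S2" unfolding S2_def using pe by auto
        moreover have "h2 (?j, n div q^?j) = n" unfolding h2_def using pe(3) by simp
        ultimately show "n \<in> h2 ` S2" by (metis image_eqI)
      qed
    qed
  qed
  have "(\<Sum>n\<in>A. g n) = (\<Sum>n\<in>A1. g n) + (\<Sum>n\<in>A2. g n)"
  proof -
    have "A = A1 \<union> A2" "A1 \<inter> A2 = {}" unfolding A1_def A2_def by auto
    moreover have "finite A" unfolding A_def by simp
    ultimately show ?thesis by (metis finite_Un sum.union_disjoint)
  qed
  also have "(\<Sum>n\<in>A1. g n) = (\<Sum>x\<in>S1. g (h1 x))"
    using sum.reindex_bij_betw[OF bij1, of g] by simp
  also have "\<dots> = (\<Sum>m\<in>{m. m + r \<le> k}. \<Sum>a\<in>Bl(k-m-r). \<Sum>b<q^m. g (q^(m+r)*a+b))"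
  proof -
    have "(\<Sum>m\<in>{m. m + r \<le> k}. \<Sum>a\<in>Bl(k-m-r). \<Sum>b<q^m. g (q^(m+r)*a+b))
       = (\<Sum>m\<in>{m. m + r \<le> k}. \<Sum>p\<in>Bl(k-m-r) \<times> {..<q^m}. g (q^(m+r)*fst p+snd p))"
      by (intro sum.cong refl) (simp add: sum.cartesian_product case_prod_beta)
    also have "\<dots> = (\<Sum>x\<in>S1. g (h1 x))"
      unfolding S1_def h1_def by (subst sum.Sigma[OF finM]) (auto simp: case_prod_beta)
    finally show ?thesis by simp
  qed
  also have "(\<Sum>n\<in>A2. g n) = (\<Sum>x\<in>S2. g (h2 x))"
    using sum.reindex_bij_betw[OF bij2, of g] by simp
  also have "\<dots> = (\<Sum>j<r. \<Sum>a\<in>Bl(k-j). g (q^j*a))"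
    unfolding S2_def h2_def by (subst sum.Sigma) (auto simp: case_prod_beta)
  finally show ?thesis unfolding A_def .
qed

end


locale qrf = qr + fixes f :: "nat \<Rightarrow> real"
  assumes fpos: "\<And>n. f n > 0" and qm: "quasimult q r f"
begin

lemma f0: "f 0 = 1"
proof -
  have h: "\<forall>a b k. b < q^k \<longrightarrow> f (q^(k+r)*a+b) = f a * f b" using qm quasimult_def by simp
  have "f (q^(0+r)*0+0) = f 0 * f 0" using h[rule_format, of 0 0 0] by simp
  hence "f 0 * (f 0 - 1) = 0" by (simp add: algebra_simps)
  thus ?thesis using fpos[of 0] by simp
qed

lemma fpow_mult: "b < q^m \<Longrightarrow> fpow f (q^(m+r)*a+b) t = fpow f a t * fpow f b t"
proof -
  assume b: "b < q^m"
  have h: "\<forall>a b k. b < q^k \<longrightarrow> f (q^(k+r)*a+b) = f a * f b" using qm quasimult_def by simp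
  have "f (q^(m+r)*a+b) = f a * f b" using h b by blast
  hence "ln (f (q^(m+r)*a+b)) = ln (f a) + ln (f b)" using fpos[of a] fpos[of b] by (simp add: ln_mult)
  thus ?thesis unfolding fpow_def by (simp add: distrib_left exp_add)
qed

lemma fpow_0 [simp]: "fpow f 0 t = 1" unfolding fpow_def by (simp add: f0)

lemma fpow_t0 [simp]: "fpow f n 0 = 1" unfolding fpow_def by simp

definition Gcoef :: "complex \<Rightarrow> nat \<Rightarrow> complex" where
  "Gcoef t k = (\<Sum>j<r. \<Sum>a\<in>Bl(k-j). fpow f (q^j*a) t)"

lemma Bcoef_Bl: "Bcoef q r f t l = (\<Sum>a\<in>Bl l. fpow f a t)"
  unfolding Bcoef_def Bl_def by simp

lemma Fcoef_rec: assumes k: "k \<ge> 1"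
  shows "Fcoef q f t k = Fcoef q f t (k-1) +
     (\<Sum>m\<in>{m. m + r \<le> k}. Bcoef q r f t (k-m-r) * Fcoef q f t m) + Gcoef t k"
proof -
  have sub: "q^(k-1) \<le> q^k" using q2 by (intro power_increasing) auto
  have eq: "{..<q^k} = {..<q^(k-1)} \<union> {q^(k-1)..<q^k}" using sub by auto
  have "Fcoef q f t k = (\<Sum>n\<in>{..<q^(k-1)} \<union> {q^(k-1)..<q^k}. fpow f n t)"
    unfolding Fcoef_def using eq by simp
  also have "\<dots> = Fcoef q f t (k-1) + (\<Sum>n\<in>{q^(k-1)..<q^k}. fpow f n t)"
    unfolding Fcoef_def by (rule sum.union_disjoint) auto
  also have "(\<Sum>n\<in>{q^(k-1)..<q^k}. fpow f n t) =
     (\<Sum>m\<in>{m. m + r \<le> k}. Bcoef q r f t (k-m-r) * Fcoef q f t m) + Gcoef t k"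
  proof -
    have "\<And>m. (\<Sum>a\<in>Bl(k-m-r). \<Sum>b<q^m. fpow f (q^(m+r)*a+b) t)
            = (\<Sum>a\<in>Bl(k-m-r). fpow f a t) * (\<Sum>b<q^m. fpow f b t)"
    proof -
      fix m
      have "(\<Sum>a\<in>Bl(k-m-r). \<Sum>b<q^m. fpow f (q^(m+r)*a+b) t)
          = (\<Sum>a\<in>Bl(k-m-r). \<Sum>b<q^m. fpow f a t * fpow f b t)"
        by (intro sum.cong refl) (simp add: fpow_mult)
      also have "\<dots> = (\<Sum>a\<in>Bl(k-m-r). fpow f a t) * (\<Sum>b<q^m. fpow f b t)"
        by (rule sum_product[symmetric])
      finally show "?thesis m" .
    qed
    thus ?thesis unfolding sum_top[OF k] Gcoef_def Bcoef_Bl Fcoef_def by simp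
  qed
  finally show ?thesis by simp
qed

lemma Gcoef_0 [simp]: "Gcoef t 0 = 0" unfolding Gcoef_def by simp

lemma Fcoef_0 [simp]: "Fcoef q f t 0 = 1" unfolding Fcoef_def by simp

lemma fps_identity:
  "Abs_fps (Fcoef q f t) = 1 + fps_X * Abs_fps (Fcoef q f t)
     + fps_X^r * (Abs_fps (Bcoef q r f t) * Abs_fps (Fcoef q f t)) + Abs_fps (Gcoef t)"
proof (rule fps_ext)
  fix n
  show "Abs_fps (Fcoef q f t) $ n = (1 + fps_X * Abs_fps (Fcoef q f t)
     + fps_X^r * (Abs_fps (Bcoef q r f t) * Abs_fps (Fcoef q f t)) + Abs_fps (Gcoef t)) $ n"
  proof (cases "n = 0")
    case True thus ?thesis using r1 by (simp add: fps_X_power_mult_nth)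
  next
    case False
    have conv: "(\<Sum>m\<in>{m. m + r \<le> n}. Bcoef q r f t (n-m-r) * Fcoef q f t m) =
      (if n < r then 0 else (\<Sum>i=0..n-r. Bcoef q r f t i * Fcoef q f t (n - r - i)))"
    proof (cases "n < r")
      case True hence "{m. m + r \<le> n} = {}" by auto
      thus ?thesis using True by simp
    next
      case False
      hence "{m. m + r \<le> n} = {0..n-r}" by auto
      hence "(\<Sum>m\<in>{m. m + r \<le> n}. Bcoef q r f t (n-m-r) * Fcoef q f t m)
          = (\<Sum>m=0..n-r. Bcoef q r f t (n-m-r) * Fcoef q f t m)" by simp
      also have "\<dots> = (\<Sum>i=0..n-r. Bcoef q r f t (n-(n-r-i)-r) * Fcoef q f t (n-r-i))"
        by (subst sum.atLeastAtMost_rev) simp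
      also have "\<dots> = (\<Sum>i=0..n-r. Bcoef q r f t i * Fcoef q f t (n-r-i))"
        using False by (intro sum.cong refl) auto
      finally show ?thesis using False by simp
    qed
    have e1: "(fps_X^r * (Abs_fps (Bcoef q r f t) * Abs_fps (Fcoef q f t))) $ n =
      (if n < r then 0 else (\<Sum>i=0..n-r. Bcoef q r f t i * Fcoef q f t (n - r - i)))"
      unfolding fps_X_power_mult_nth by (simp add: fps_mult_nth)
    have e2: "(fps_X * Abs_fps (Fcoef q f t)) $ n = Fcoef q f t (n-1)" using False by simp
    show ?thesis using False Fcoef_rec[of n t] conv e1 e2 by (simp only: fps_add_nth) simp
  qed
qed

end

context qr begin

definition Pk :: "nat \<Rightarrow> nat \<Rightarrow> bool" where
  "Pk k n = (\<forall>i < k div r. \<not> q^r dvd (n div q^(r*i)))"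

lemma card_Pk: "card {n. n < q^k \<and> Pk k n} \<le> (q^r - 1)^(k div r) * q^(k mod r)"
proof (induction k rule: less_induct)
  case (less k)
  show ?case
  proof (cases "k < r")
    case True
    have "card {n. n < q^k \<and> Pk k n} \<le> card {..<q^k}" by (intro card_mono) auto
    thus ?thesis using True by simp
  next
    case False
    have kr: "k - r < k" using r1 False by simp
    have kk: "k = (k - r) + r" using False by simp
    have d1: "((k-r)+r) div r = (k-r) div r + 1" "((k-r)+r) mod r = (k-r) mod r" using r1 by simp_all
    have dk: "(k - r) div r = k div r - 1" "(k - r) mod r = k mod r" "k div r \<ge> 1"
      using d1 kk by simp_all
    define S where "S = {n. n < q^k \<and> Pk k n}"
    define T where "T = {x. x < q^r \<and> x \<noteq> 0} \<times> {n. n < q^(k-r) \<and> Pk (k-r) n}"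
    have inj: "inj_on (\<lambda>n. (n mod q^r, n div q^r)) S"
      by (rule inj_onI) (metis div_mult_mod_eq prod.inject)
    have img: "(\<lambda>n. (n mod q^r, n div q^r)) ` S \<subseteq> T"
    proof
      fix y assume "y \<in> (\<lambda>n. (n mod q^r, n div q^r)) ` S"
      then obtain n where n: "n \<in> S" and y: "y = (n mod q^r, n div q^r)" by blast
      have nk: "n < q^k" and P: "Pk k n" using n unfolding S_def by auto
      have "\<not> q^r dvd n" using P dk(3) unfolding Pk_def by (metis div_by_1 mult_0_right power_0 zero_less_one less_le_trans)
      hence m1: "n mod q^r \<noteq> 0" by (simp add: dvd_eq_mod_eq_0)
      have "q^k = q^r * q^(k-r)" using False by (simp add: power_add[symmetric])
      hence m2: "n div q^r < q^(k-r)" using nk qpos by (simp add: less_mult_imp_div_less mult.commute)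
      have m3: "Pk (k-r) (n div q^r)" unfolding Pk_def
      proof (intro allI impI)
        fix i assume i: "i < (k - r) div r"
        have "n div q^r div q^(r*i) = n div q^(r * Suc i)" by (simp add: div_mult2_eq power_add)
        moreover have "Suc i < k div r" using i dk by simp
        ultimately show "\<not> q^r dvd n div q^r div q^(r*i)" using P[unfolded Pk_def, rule_format, of "Suc i"] by simp
      qed
      show "y \<in> T" unfolding T_def y using m1 m2 m3 qpos by simp
    qed
    have fT: "finite T" unfolding T_def by auto
    have "card S \<le> card T" using card_inj_on_le[OF inj img fT] .
    also have "card T = card {x. x < q^r \<and> x \<noteq> 0} * card {n. n < q^(k-r) \<and> Pk (k-r) n}"
      unfolding T_def by (rule card_cartesian_product)
    also have "card {x. x < q^r \<and> x \<noteq> 0} = q^r - 1"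
    proof -
      have "{x. x < q^r \<and> x \<noteq> 0} = {1..<q^r}" by auto
      thus ?thesis by simp
    qed
    also have "(q^r - 1) * card {n. n < q^(k-r) \<and> Pk (k-r) n} \<le> (q^r - 1) * ((q^r - 1)^((k-r) div r) * q^((k-r) mod r))"
      using less.IH[OF kr] by simp
    also have "\<dots> = (q^r - 1)^(k div r) * q^(k mod r)"
    proof -
      have "k div r = Suc ((k-r) div r)" using dk by simp
      thus ?thesis using dk(2) by (simp only: power_Suc mult.assoc)
    qed
    finally show ?thesis unfolding S_def .
  qed
qed

lemma Bl_sub_Pk: "Bl l \<subseteq> {n. n < q^l \<and> Pk l n}"
proof
  fix a assume a: "a \<in> Bl l"
  have aB: "a \<in> Bset q r" and al: "qlen q a = l" using a unfolding Bl_def by auto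
  have anb: "\<not>(\<exists>j. j + r \<le> qlen q a \<and> q^r dvd a div q^j)" using aB Bset_iff by auto
  have "Pk l a" unfolding Pk_def
  proof (intro allI impI)
    fix i assume i: "i < l div r"
    have "r * i + r = r * Suc i" by simp
    also have "\<dots> \<le> r * (l div r)" using i by (intro mult_le_mono2) simp
    also have "\<dots> \<le> l" by simp
    finally show "\<not> q^r dvd a div q^(r*i)" using anb al by blast
  qed
  thus "a \<in> {n. n < q^l \<and> Pk l n}" using Bl_sub a by auto
qed

lemma card_Bl_nat: "card (Bl l) \<le> (q^r - 1)^(l div r) * q^(l mod r)"
proof -
  have "card (Bl l) \<le> card {n. n < q^l \<and> Pk l n}" by (rule card_mono[OF _ Bl_sub_Pk]) auto
  thus ?thesis using card_Pk[of l] by linarith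
qed

definition sig :: real where "sig = 1 - 1 / real q ^ r"
definition lam :: real where "lam = real q * sig powr (1 / real r)"

lemma sig_bounds: "1/2 \<le> sig" "sig < 1"
proof -
  have "(2::real) \<le> real q ^ 1" using q2 by simp
  also have "\<dots> \<le> real q ^ r" using r1 q2 by (intro power_increasing) auto
  finally have "real q ^ r \<ge> 2" .
  moreover have "real q ^ r > 0" using qpos by simp
  ultimately show "1/2 \<le> sig" unfolding sig_def by (simp add: field_simps)
  show "sig < 1" unfolding sig_def using qpos by simp
qed

lemma lam_bounds: "1 \<le> lam" "lam < real q"
proof -
  have s0: "0 < sig" using sig_bounds by simp
  have "sig powr (1 / real r) < 1 powr (1 / real r)" using sig_bounds s0 r1 by (intro powr_less_mono2) auto
  hence "sig powr (1 / real r) < 1" by simp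
  thus "lam < real q" unfolding lam_def using qpos by simp
  have "sig powr 1 \<le> sig powr (1 / real r)"
    using s0 sig_bounds r1 by (intro powr_mono') auto
  hence "sig \<le> sig powr (1 / real r)" using s0 by simp
  hence "real q * sig \<le> lam" unfolding lam_def using qpos by simp
  moreover have "2 * (1/2) \<le> real q * sig" using sig_bounds q2 by (intro mult_mono) auto
  ultimately show "1 \<le> lam" by simp
qed

lemma card_Bl: "real (card (Bl l)) \<le> lam ^ l / sig"
proof -
  have s0: "0 < sig" "sig < 1" using sig_bounds by auto
  have "real (card (Bl l)) \<le> real ((q^r - 1)^(l div r) * q^(l mod r))"
    using card_Bl_nat of_nat_le_iff by blast
  also have "real ((q^r - 1)^(l div r) * q^(l mod r)) = (real q ^ r * sig)^(l div r) * real q^(l mod r)"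
  proof -
    have "q^r \<ge> 1" using qpos by simp
    hence "real (q^r - 1) = real q ^ r * sig" unfolding sig_def using qpos by (simp add: of_nat_diff field_simps)
    thus ?thesis by simp
  qed
  also have "\<dots> = real q ^ l * sig^(l div r)"
  proof -
    have "real q ^ l = real q ^ (r * (l div r)) * real q ^ (l mod r)"
      by (simp add: power_add[symmetric])
    thus ?thesis by (simp add: power_mult_distrib power_mult)
  qed
  also have "sig^(l div r) \<le> sig powr (real l / real r - 1)"
  proof -
    have "sig^(l div r) = sig powr real (l div r)" using s0 by (simp add: powr_realpow)
    also have "\<dots> \<le> sig powr (real l / real r - 1)"
    proof (rule powr_mono')
      have "real l / real r - 1 \<le> real (l div r)"
      proof -
        have "real l = real r * real (l div r) + real (l mod r)"
          by (metis of_nat_add of_nat_mult div_mult_mod_eq mult.commute)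
        moreover have "real (l mod r) < real r" using r1 by simp
        ultimately show ?thesis using r1 by (simp add: field_simps)
      qed
      thus "real l / real r - 1 \<le> real (l div r)" .
    qed (use s0 in auto)
    finally show ?thesis .
  qed
  hence "real q ^ l * sig^(l div r) \<le> real q ^ l * sig powr (real l / real r - 1)"
    by (intro mult_left_mono) auto
  also have "sig powr (real l / real r - 1) = (sig powr (1 / real r))^l / sig"
    using s0 by (simp add: powr_diff powr_realpow[symmetric] powr_powr field_simps)
  also have "real q ^ l * ((sig powr (1 / real r))^l / sig) = lam ^ l / sig"
    unfolding lam_def by (simp add: power_mult_distrib)
  finally show ?thesis .
qed

end


lemma norm_exp_minus_one: "norm (exp (z::complex) - 1) \<le> norm z * exp (norm z)"
proof -
  have "norm (exp z - exp 0) \<le> exp (norm z) * norm (z - 0)"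
  proof (rule field_differentiable_bound[of "closed_segment 0 z" exp exp])
    show "convex (closed_segment 0 z)" by simp
    show "(exp has_field_derivative exp w) (at w within closed_segment 0 z)" for w
      by (rule DERIV_exp[THEN has_field_derivative_at_within])
    show "norm (exp w) \<le> exp (norm z)" if "w \<in> closed_segment 0 z" for w
    proof -
      have "norm w \<le> norm z" using that segment_bound by (metis diff_zero norm_minus_commute)
      hence "Re w \<le> norm z" using complex_Re_le_cmod order_trans by blast
      thus ?thesis by simp
    qed
  qed auto
  thus ?thesis by (simp add: mult.commute)
qed

locale S = qrf +
  fixes a0 b0 :: real
  assumes a0: "a0 \<ge> 0" and b0: "b0 \<ge> 0"
    and logb: "\<And>k n. n < q^k \<Longrightarrow> \<bar>ln (f n)\<bar> \<le> a0 + b0 * real k"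
begin

definition d0 :: real where "d0 = ln (real q / lam) / (4 * (b0 + 1))"
definition gam :: real where "gam = lam * exp (2 * d0 * b0)"
definition AA :: real where "AA = real r * exp (2 * d0 * a0) / sig"

lemma d0_pos: "d0 > 0"
proof -
  have "real q / lam > 1" using lam_bounds by simp
  thus ?thesis unfolding d0_def using b0 by simp
qed

lemma gam_bounds: "gam \<ge> 1" "gam < real q"
proof -
  have "exp (2 * d0 * b0) \<ge> 1" using d0_pos b0 by simp
  hence "1 * 1 \<le> lam * exp (2 * d0 * b0)" using lam_bounds by (intro mult_mono) auto
  thus "gam \<ge> 1" unfolding gam_def by simp
  have l0: "lam > 0" using lam_bounds by simp
  have "2 * d0 * b0 \<le> ln (real q / lam) / 2"
  proof -
    have "ln (real q / lam) \<ge> 0" using lam_bounds l0 by simp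
    moreover have "2 * d0 * b0 = ln (real q / lam) * (b0 / (2*(b0+1)))" unfolding d0_def using b0 by (simp add: field_simps)
    moreover have "b0 / (2*(b0+1)) \<le> 1/2" using b0 by (simp add: field_simps)
    ultimately have "2 * d0 * b0 \<le> ln (real q / lam) * (1/2)" by (metis mult_left_mono)
    thus ?thesis by simp
  qed
  hence "exp (2 * d0 * b0) \<le> exp (ln (real q / lam) / 2)" by simp
  also have "\<dots> = (real q / lam) powr (1/2)" using lam_bounds l0 qpos by (simp add: powr_def)
  also have "\<dots> = sqrt (real q / lam)" using l0 by (simp add: powr_half_sqrt)
  finally have "gam \<le> lam * sqrt (real q / lam)" unfolding gam_def using l0 by simp
  also have "lam * sqrt (real q / lam) = sqrt (real q * lam)"
  proof (rule real_sqrt_unique[symmetric])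
    show "(lam * sqrt (real q / lam))^2 = real q * lam" using l0 qpos
      by (simp add: power_mult_distrib power2_eq_square[of lam] field_simps)
    show "0 \<le> lam * sqrt (real q / lam)" using l0 by simp
  qed
  also have "\<dots> < sqrt (real q * real q)" using lam_bounds qpos by (intro real_sqrt_less_mono) simp
  also have "\<dots> = real q" by simp
  finally show "gam < real q" .
qed

end

context S begin

definition Ek :: "nat \<Rightarrow> real" where "Ek k = exp (2 * d0 * (a0 + b0 * real k))"

lemma Ek_pos: "Ek k > 0" unfolding Ek_def by simp

lemma Ek_eq: "Ek k = exp (2*d0*a0) * exp (2*d0*b0) ^ k"
  unfolding Ek_def by (simp add: distrib_left exp_add exp_of_nat_mult[symmetric] mult.commute mult.left_commute)

lemma fpow_norm: assumes n: "n < q^k" and t: "norm t \<le> d0"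
  shows "norm (fpow f n t) \<le> Ek k"
proof -
  have L: "\<bar>ln (f n)\<bar> \<le> a0 + b0 * real k" using logb[OF n] .
  have "Re (t * of_real (ln (f n))) = Re t * ln (f n)" by simp
  also have "\<dots> \<le> \<bar>Re t\<bar> * \<bar>ln (f n)\<bar>" by (metis abs_ge_self abs_mult)
  also have "\<dots> \<le> d0 * (a0 + b0 * real k)"
    using t L abs_Re_le_cmod[of t] by (intro mult_mono) auto
  also have "\<dots> \<le> 2 * d0 * (a0 + b0 * real k)" using d0_pos a0 b0 by simp
  finally show ?thesis unfolding fpow_def Ek_def by simp
qed

lemma fpow_diff: assumes n: "n < q^k" and t: "norm t \<le> d0"
  shows "norm (fpow f n t - 1) \<le> norm t / d0 * Ek k"
proof -
  define La where "La = a0 + b0 * real k"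
  have La0: "La \<ge> 0" unfolding La_def using a0 b0 by simp
  have L: "\<bar>ln (f n)\<bar> \<le> La" using logb[OF n] unfolding La_def .
  have nz: "norm (t * of_real (ln (f n))) \<le> norm t * La"
    using L by (simp add: norm_mult mult_left_mono)
  have "norm (fpow f n t - 1) \<le> norm (t * of_real (ln (f n))) * exp (norm (t * of_real (ln (f n))))"
    unfolding fpow_def by (rule norm_exp_minus_one)
  also have "\<dots> \<le> (norm t * La) * exp (d0 * La)"
  proof (rule mult_mono)
    have "norm t * La \<le> d0 * La" using t La0 by (intro mult_right_mono) auto
    thus "exp (norm (t * of_real (ln (f n)))) \<le> exp (d0 * La)" using nz by simp
  qed (use nz La0 in auto)
  also have "\<dots> \<le> (norm t / d0 * exp (d0 * La)) * exp (d0 * La)"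
  proof (intro mult_right_mono)
    have "d0 * La \<le> exp (d0 * La)" using exp_ge_add_one_self[of "d0 * La"] by linarith
    hence "La \<le> exp (d0 * La) / d0" using d0_pos by (simp add: field_simps)
    hence "norm t * La \<le> norm t * (exp (d0 * La) / d0)" by (intro mult_left_mono) auto
    thus "norm t * La \<le> norm t / d0 * exp (d0 * La)" by simp
  qed auto
  also have "\<dots> = norm t / d0 * Ek k" unfolding Ek_def La_def by (simp add: mult_exp_exp)
  finally show ?thesis .
qed

lemma sum_norm_bound:
  fixes g :: "'b \<Rightarrow> 'a::real_normed_vector"
  assumes "finite Sx" "\<And>a. a \<in> Sx \<Longrightarrow> norm (g a) \<le> B"
  shows "norm (sum g Sx) \<le> real (card Sx) * B"
proof -
  have "norm (sum g Sx) \<le> (\<Sum>a\<in>Sx. norm (g a))" by (rule norm_sum)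
  also have "\<dots> \<le> real (card Sx) * B" using assms(2) by (rule sum_bounded_above)
  finally show ?thesis .
qed

lemma gam_Ek: "lam ^ k / sig * Ek k = exp (2*d0*a0) / sig * gam ^ k"
  unfolding Ek_eq gam_def by (simp add: power_mult_distrib)

lemma AA_ge: "exp (2*d0*a0) / sig \<le> AA"
proof -
  have "exp (2*d0*a0) / sig \<ge> 0" using sig_bounds by simp
  hence "1 * (exp (2*d0*a0) / sig) \<le> real r * (exp (2*d0*a0) / sig)" using r1 by (intro mult_right_mono) auto
  thus ?thesis unfolding AA_def by simp
qed

lemma AA_pos: "AA > 0" unfolding AA_def using r1 sig_bounds by simp

lemma Bcoef_bound: assumes t: "norm t \<le> d0" shows "norm (Bcoef q r f t k) \<le> AA * gam ^ k"
proof -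
  have "norm (Bcoef q r f t k) \<le> real (card (Bl k)) * Ek k"
    unfolding Bcoef_Bl using Bl_sub fpow_norm[OF _ t] by (intro sum_norm_bound) auto
  also have "\<dots> \<le> lam ^ k / sig * Ek k" using card_Bl less_imp_le[OF Ek_pos] by (intro mult_right_mono) auto
  also have "\<dots> \<le> AA * gam ^ k" unfolding gam_Ek using AA_ge gam_bounds by (intro mult_right_mono) auto
  finally show ?thesis .
qed

lemma Bcoef_0: "Bcoef q r f 0 k = of_nat (card (Bl k))"
  unfolding Bcoef_Bl by simp

lemma Bcoef_diff: assumes t: "norm t \<le> d0"
  shows "norm (Bcoef q r f t k - Bcoef q r f 0 k) \<le> norm t / d0 * AA * gam ^ k"
proof -
  have "Bcoef q r f t k - Bcoef q r f 0 k = (\<Sum>a\<in>Bl k. fpow f a t - 1)"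
    unfolding Bcoef_Bl by (simp add: sum_subtractf)
  moreover have "norm (\<Sum>a\<in>Bl k. fpow f a t - 1) \<le> real (card (Bl k)) * (norm t / d0 * Ek k)"
    by (rule sum_norm_bound) (use Bl_sub fpow_diff[OF _ t] in auto)
  ultimately have "norm (Bcoef q r f t k - Bcoef q r f 0 k) \<le> real (card (Bl k)) * (norm t / d0 * Ek k)"
    by simp
  also have "\<dots> \<le> lam ^ k / sig * (norm t / d0 * Ek k)"
    using card_Bl less_imp_le[OF Ek_pos] d0_pos by (intro mult_right_mono) auto
  also have "\<dots> = norm t / d0 * (lam ^ k / sig * Ek k)" by (simp add: mult_ac)
  also have "\<dots> \<le> norm t / d0 * (AA * gam ^ k)" unfolding gam_Ek
    using AA_ge gam_bounds d0_pos by (intro mult_left_mono mult_right_mono) auto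
  finally show ?thesis by simp
qed

lemma Gterm_less: assumes "j < r" "a \<in> Bl (k - j)" "Bl (k - j) \<noteq> {}" shows "q^j * a < q^k"
proof -
  have "k - j \<noteq> 0" using assms(3) by (metis Bl_0)
  hence jk: "j \<le> k" by simp
  have "a < q^(k-j)" using assms(2) Bl_sub by auto
  hence "q^j * a < q^j * q^(k-j)" using qpos by simp
  also have "\<dots> = q^k" using jk by (simp add: power_add[symmetric])
  finally show ?thesis .
qed

lemma card_Bl_le: "j \<le> k \<Longrightarrow> real (card (Bl (k - j))) \<le> lam ^ k / sig"
proof -
  assume "j \<le> k"
  have "real (card (Bl (k - j))) \<le> lam ^ (k - j) / sig" by (rule card_Bl)
  also have "\<dots> \<le> lam ^ k / sig" using lam_bounds sig_bounds
    by (intro divide_right_mono power_increasing) auto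
  finally show ?thesis .
qed

lemma Gcoef_gen_bound:
  fixes h :: "nat \<Rightarrow> complex"
  assumes "\<And>n. n < q^k \<Longrightarrow> norm (h n) \<le> B" "B \<ge> 0"
  shows "norm (\<Sum>j<r. \<Sum>a\<in>Bl(k-j). h (q^j*a)) \<le> real r * (lam ^ k / sig) * B"
proof -
  have "norm (\<Sum>j<r. \<Sum>a\<in>Bl(k-j). h (q^j*a)) \<le> real (card {..<r}) * (lam ^ k / sig * B)"
  proof (rule sum_norm_bound)
    fix j assume j: "j \<in> {..<r}"
    show "norm (\<Sum>a\<in>Bl(k-j). h (q^j*a)) \<le> lam ^ k / sig * B"
    proof (cases "Bl (k - j) = {}")
      case True thus ?thesis using lam_bounds sig_bounds assms(2) by simp
    next
      case False
      hence jk: "j \<le> k" by (metis Bl_0 diff_is_0_eq nat_le_linear)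
      have "norm (\<Sum>a\<in>Bl(k-j). h (q^j*a)) \<le> real (card (Bl (k-j))) * B"
        using Gterm_less[OF _ _ False] j assms(1) by (intro sum_norm_bound) auto
      also have "\<dots> \<le> lam ^ k / sig * B" using card_Bl_le[OF jk] assms(2) by (intro mult_right_mono)
      finally show ?thesis .
    qed
  qed auto
  thus ?thesis by simp
qed

lemma Gcoef_bound: assumes t: "norm t \<le> d0" shows "norm (Gcoef t k) \<le> AA * gam ^ k"
proof -
  have "norm (Gcoef t k) \<le> real r * (lam ^ k / sig) * Ek k"
    unfolding Gcoef_def using fpow_norm[OF _ t] Ek_pos by (intro Gcoef_gen_bound) (auto simp: less_imp_le)
  also have "\<dots> = real r * (lam ^ k / sig * Ek k)" by simp
  also have "\<dots> = AA * gam ^ k" unfolding gam_Ek AA_def by simp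
  finally show ?thesis .
qed

lemma Gcoef_diff: assumes t: "norm t \<le> d0"
  shows "norm (Gcoef t k - Gcoef 0 k) \<le> norm t / d0 * AA * gam ^ k"
proof -
  have "Gcoef t k - Gcoef 0 k = (\<Sum>j<r. \<Sum>a\<in>Bl(k-j). fpow f (q^j*a) t - 1)"
    unfolding Gcoef_def by (simp add: sum_subtractf)
  moreover have "norm (\<Sum>j<r. \<Sum>a\<in>Bl(k-j). fpow f (q^j*a) t - 1) \<le> real r * (lam ^ k / sig) * (norm t / d0 * Ek k)"
    using fpow_diff[OF _ t] Ek_pos d0_pos by (intro Gcoef_gen_bound) (auto simp: less_imp_le)
  ultimately have "norm (Gcoef t k - Gcoef 0 k) \<le> real r * (lam ^ k / sig) * (norm t / d0 * Ek k)" by simp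
  also have "\<dots> = norm t / d0 * (real r * (lam ^ k / sig * Ek k))" by (simp add: mult_ac)
  also have "\<dots> = norm t / d0 * (real r * (exp (2*d0*a0) / sig * gam ^ k))"
    unfolding gam_Ek ..
  also have "\<dots> = norm t / d0 * AA * gam ^ k" unfolding AA_def by simp
  finally show ?thesis .
qed

lemma Gcoef_0: "Gcoef 0 k = of_real (\<Sum>j<r. real (card (Bl (k-j))))"
  unfolding Gcoef_def by simp

end


lemma ereal_lt_le: "a < b \<Longrightarrow> ereal b \<le> F \<Longrightarrow> ereal a < F"
proof -
  assume "a < b" "ereal b \<le> F"
  moreover have "ereal a < ereal b" using \<open>a < b\<close> by simp
  ultimately show ?thesis using less_le_trans by blast
qed

lemma powser_bound:
  fixes c :: "nat \<Rightarrow> complex"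
  assumes cb: "\<And>k. norm (c k) \<le> A * g^k" and g: "g \<ge> 0" and x: "norm x \<le> \<rho>" and gr: "g * \<rho> < 1"
  shows "summable (\<lambda>k. c k * x^k)" "norm (\<Sum>k. c k * x^k) \<le> A / (1 - g*\<rho>)"
proof -
  have r0: "\<rho> \<ge> 0" using x norm_ge_zero order_trans by blast
  have gr0: "g * \<rho> \<ge> 0" using g r0 by simp
  have b: "norm (c k * x^k) \<le> A * (g*\<rho>)^k" for k
  proof -
    have Ag: "0 \<le> A * g^k" using order_trans[OF norm_ge_zero cb[of k]] .
    have "norm (c k * x^k) = norm (c k) * norm x ^ k" by (simp add: norm_mult norm_power)
    also have "\<dots> \<le> (A * g^k) * \<rho>^k" using Ag by (intro mult_mono[OF cb power_mono[OF x]]) auto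
    also have "\<dots> = A * (g*\<rho>)^k" by (simp add: power_mult_distrib)
    finally show ?thesis .
  qed
  have sg: "summable (\<lambda>k. A * (g*\<rho>)^k)" using gr gr0 by (intro summable_mult summable_geometric) simp
  have sn: "summable (\<lambda>k. norm (c k * x^k))" by (rule summable_comparison_test'[OF sg]) (use b in auto)
  show "summable (\<lambda>k. c k * x^k)" using sn by (rule summable_norm_cancel)
  have "norm (\<Sum>k. c k * x^k) \<le> (\<Sum>k. norm (c k * x^k))" by (rule summable_norm[OF sn])
  also have "\<dots> \<le> (\<Sum>k. A * (g*\<rho>)^k)" by (rule suminf_le[OF b sn sg])
  also have "\<dots> = A * (\<Sum>k. (g*\<rho>)^k)" using gr gr0 by (subst suminf_mult) (auto intro: summable_geometric)
  also have "\<dots> = A / (1 - g*\<rho>)" using gr gr0 by (subst suminf_geometric) (auto simp: divide_simps)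
  finally show "norm (\<Sum>k. c k * x^k) \<le> A / (1 - g*\<rho>)" .
qed

lemma radius_ge:
  fixes c :: "nat \<Rightarrow> complex"
  assumes cb: "\<And>k. norm (c k) \<le> A * g^k" and g: "g > 0"
  shows "ereal (1/g) \<le> conv_radius c"
proof (rule conv_radius_geI_ex')
  fix \<rho> :: real assume "0 < \<rho>" "ereal \<rho> < ereal (1/g)"
  hence "g * \<rho> < 1" using g by (simp add: field_simps)
  thus "summable (\<lambda>n. c n * of_real \<rho> ^ n)"
    using powser_bound(1)[OF cb, of "of_real \<rho>" \<rho>] g \<open>0 < \<rho>\<close> by simp
qed

context S begin

definition Bf :: "complex \<Rightarrow> complex fps" where "Bf t = Abs_fps (Bcoef q r f t)"
definition Gf :: "complex \<Rightarrow> complex fps" where "Gf t = Abs_fps (Gcoef t)"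
definition Qf :: "complex \<Rightarrow> complex fps" where "Qf t = 1 - fps_X - fps_X^r * Bf t"
definition Qfun :: "complex \<Rightarrow> complex \<Rightarrow> complex" where "Qfun t x = 1 - x - x^r * Bfun q r f x t"
definition Gfun :: "complex \<Rightarrow> complex \<Rightarrow> complex" where "Gfun t x = eval_fps (Gf t) x"
definition R2 :: real where "R2 = 1 / gam"

lemma R2_pos: "R2 > 0" unfolding R2_def using gam_bounds by simp

lemma Bfun_eval: "Bfun q r f x t = eval_fps (Bf t) x"
  unfolding Bfun_def eval_fps_def Bf_def by simp

lemma radius_Bf: "norm t \<le> d0 \<Longrightarrow> ereal R2 \<le> fps_conv_radius (Bf t)"
  unfolding fps_conv_radius_def Bf_def R2_def using Bcoef_bound gam_bounds
  by (intro radius_ge[where A=AA]) auto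

lemma radius_Gf: "norm t \<le> d0 \<Longrightarrow> ereal R2 \<le> fps_conv_radius (Gf t)"
  unfolding fps_conv_radius_def Gf_def R2_def using Gcoef_bound gam_bounds
  by (intro radius_ge[where A=AA]) auto

lemma radius_Qf: "norm t \<le> d0 \<Longrightarrow> ereal R2 \<le> fps_conv_radius (Qf t)"
proof -
  assume t: "norm t \<le> d0"
  have "ereal R2 \<le> fps_conv_radius (fps_X^r * Bf t)"
    using fps_conv_radius_mult[of "fps_X^r" "Bf t"] radius_Bf[OF t] by (simp add: min_def split: if_splits)
  moreover have "fps_conv_radius (1 - fps_X :: complex fps) = \<infinity>"
    using fps_conv_radius_diff[of 1 "fps_X :: complex fps"] by simp
  moreover have "min (fps_conv_radius (1 - fps_X :: complex fps)) (fps_conv_radius (fps_X^r*Bf t)) \<le> fps_conv_radius (1 - fps_X - fps_X^r * Bf t)"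
    by (rule fps_conv_radius_diff)
  ultimately have "ereal R2 \<le> fps_conv_radius (1 - fps_X - fps_X^r * Bf t)" by simp
  thus ?thesis unfolding Qf_def .
qed

lemma Qf_eval: assumes t: "norm t \<le> d0" and x: "norm x < R2"
  shows "eval_fps (Qf t) x = Qfun t x"
proof -
  have xb: "ereal (norm x) < fps_conv_radius (Bf t)" using radius_Bf[OF t] x by (intro ereal_lt_le)
  have "eval_fps (fps_X^r * Bf t) x = x^r * eval_fps (Bf t) x"
    using xb by (subst eval_fps_mult) auto
  moreover have "ereal (norm x) < fps_conv_radius (fps_X^r * Bf t)"
    using fps_conv_radius_mult[of "fps_X^r" "Bf t"] xb by (simp add: min_def split: if_splits)
  moreover have "fps_conv_radius (1 - fps_X :: complex fps) = \<infinity>"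
    using fps_conv_radius_diff[of 1 "fps_X :: complex fps"] by simp
  ultimately have "eval_fps (1 - fps_X - fps_X^r * Bf t) x = eval_fps (1 - fps_X) x - x^r * eval_fps (Bf t) x"
    by (subst eval_fps_diff) auto
  also have "eval_fps (1 - fps_X) x = 1 - x" by (subst eval_fps_diff) auto
  finally show ?thesis unfolding Qf_def Qfun_def Bfun_eval .
qed

lemma Fcoef_t0: "Fcoef q f 0 k = of_nat (q^k)" unfolding Fcoef_def by simp

lemma fps_t0: "Qf 0 = (1 + Gf 0) * (1 - fps_const (of_nat q) * fps_X)"
proof -
  define U where "U = Abs_fps (Fcoef q f 0)"
  have id: "U = 1 + fps_X * U + fps_X^r * (Bf 0 * U) + Gf 0"
    using fps_identity[of 0] unfolding U_def Bf_def Gf_def .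
  have UQ: "U * Qf 0 = 1 + Gf 0"
  proof -
    have "U * Qf 0 = U - fps_X * U - fps_X^r * (Bf 0 * U)" unfolding Qf_def by (simp add: algebra_simps)
    also have "\<dots> = 1 + Gf 0" using id by (simp add: algebra_simps)
    finally show ?thesis .
  qed
  have U1: "U * (1 - fps_const (of_nat q) * fps_X) = 1"
  proof (rule fps_ext)
    fix n show "(U * (1 - fps_const (of_nat q) * fps_X)) $ n = 1 $ n"
    proof (cases n)
      case 0 thus ?thesis unfolding U_def by (simp add: Fcoef_t0)
    next
      case (Suc m)
      have "(U * (1 - fps_const (of_nat q) * fps_X)) $ n = U $ n - of_nat q * U $ m"
        using Suc by (simp add: algebra_simps fps_mult_fps_X_commute[symmetric] mult.assoc)
      also have "\<dots> = 0" unfolding U_def using Suc by (simp add: Fcoef_t0)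
      finally show ?thesis using Suc by simp
    qed
  qed
  have "Qf 0 = Qf 0 * (U * (1 - fps_const (of_nat q) * fps_X))" using U1 by simp
  also have "\<dots> = (U * Qf 0) * (1 - fps_const (of_nat q) * fps_X)" by (simp add: mult_ac)
  finally show ?thesis using UQ by simp
qed

lemma Q0_factor: assumes x: "norm x < R2"
  shows "Qfun 0 x = (1 + Gfun 0 x) * (1 - of_nat q * x)"
proof -
  have t: "norm (0::complex) \<le> d0" using d0_pos by simp
  have xg: "ereal (norm x) < fps_conv_radius (Gf 0)" using radius_Gf[OF t] x by (intro ereal_lt_le)
  have rc: "fps_conv_radius (fps_const (of_nat q) * fps_X :: complex fps) = \<infinity>"
      using qpos by (subst fps_conv_radius_cmult_left) auto
  have rP: "fps_conv_radius (1 - fps_const (of_nat q) * fps_X :: complex fps) = \<infinity>"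
  proof -
    show ?thesis using rc using fps_conv_radius_diff[of 1 "fps_const (of_nat q) * fps_X :: complex fps"] by simp
  qed
  have "Qfun 0 x = eval_fps (Qf 0) x" using Qf_eval[OF t x] by simp
  also have "\<dots> = eval_fps (1 + Gf 0) x * eval_fps (1 - fps_const (of_nat q) * fps_X) x"
    unfolding fps_t0 using xg fps_conv_radius_add[of 1 "Gf 0"]
    by (subst eval_fps_mult) (auto simp: rP min_def split: if_splits intro: less_le_trans)
  also have "eval_fps (1 + Gf 0) x = 1 + Gfun 0 x" unfolding Gfun_def using xg
    by (subst eval_fps_add) auto
  also have "eval_fps (1 - fps_const (of_nat q) * fps_X) x = 1 - of_nat q * x"
    by (subst eval_fps_diff) (auto simp: eval_fps_mult rc)
  finally show ?thesis .
qed

end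


lemma complex_sum_one_real:
  fixes a b :: complex
  assumes s: "a + b = 1" and n: "norm a + norm b \<le> 1"
  shows "Im a = 0" "0 \<le> Re a"
proof -
  have b: "b = 1 - a" using s by (auto simp: algebra_simps)
  have nb: "norm b \<ge> \<bar>1 - Re a\<bar>" using abs_Re_le_cmod[of b] b by simp
  have na: "norm a \<ge> \<bar>Re a\<bar>" by (rule abs_Re_le_cmod)
  show "Im a = 0"
  proof (rule ccontr)
    assume "Im a \<noteq> 0"
    hence "(Re a)\<^sup>2 < (Re a)\<^sup>2 + (Im a)\<^sup>2" by simp
    hence "sqrt ((Re a)\<^sup>2) < sqrt ((Re a)\<^sup>2 + (Im a)\<^sup>2)" by (rule real_sqrt_less_mono)
    hence "norm a > \<bar>Re a\<bar>" by (simp add: cmod_def)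
    thus False using nb n by linarith
  qed
  show "0 \<le> Re a" using na nb n by linarith
qed

context S begin

definition bc :: "nat \<Rightarrow> real" where "bc k = real (card (Bl k))"
definition gc :: "nat \<Rightarrow> real" where "gc k = (\<Sum>j<r. real (card (Bl (k-j))))"
definition b0r :: "real \<Rightarrow> real" where "b0r s = (\<Sum>k. bc k * s^k)"
definition g0r :: "real \<Rightarrow> real" where "g0r s = (\<Sum>k. gc k * s^k)"
definition x0 :: real where "x0 = 1 / real q"

lemma x0_R2: "0 < x0" "x0 < R2"
  unfolding x0_def R2_def using gam_bounds qpos by (auto simp: field_simps)

lemma bc_nonneg: "bc k \<ge> 0" unfolding bc_def by simp
lemma gc_nonneg: "gc k \<ge> 0" unfolding gc_def by (simp add: sum_nonneg)

lemma Bcoef0_real: "Bcoef q r f 0 k = of_real (bc k)" unfolding Bcoef_0 bc_def by simp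
lemma Gcoef0_real: "Gcoef 0 k = of_real (gc k)" unfolding Gcoef_0 gc_def by simp

lemma t0_le: "norm (0::complex) \<le> d0" using d0_pos by simp

lemma bc_bound: "norm (bc k) \<le> AA * gam ^ k"
  using Bcoef_bound[OF t0_le, of k] unfolding Bcoef0_real by simp
lemma gc_bound: "norm (gc k) \<le> AA * gam ^ k"
  using Gcoef_bound[OF t0_le, of k] unfolding Gcoef0_real by simp

lemma real_ser:
  fixes c :: "nat \<Rightarrow> real"
  assumes cb: "\<And>k. norm (c k) \<le> AA * gam ^ k" and s: "0 \<le> s" "s < R2"
  shows "summable (\<lambda>k. c k * s^k)" "(\<lambda>k. of_real (c k) * (of_real s :: complex)^k) sums of_real (\<Sum>k. c k * s^k)"
proof -
  have gs: "gam * s < 1" using s gam_bounds unfolding R2_def by (simp add: field_simps)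
  have b: "norm (c k * s^k) \<le> AA * (gam * s) ^ k" for k
  proof -
    have "norm (c k * s^k) = norm (c k) * s^k" using s by (simp add: abs_mult)
    also have "\<dots> \<le> AA * gam^k * s^k" using cb s by (intro mult_right_mono) auto
    finally show ?thesis by (simp add: power_mult_distrib mult.assoc)
  qed
  have sg: "summable (\<lambda>k. AA * (gam * s) ^ k)" using gs s gam_bounds by (intro summable_mult summable_geometric) simp
  show sm: "summable (\<lambda>k. c k * s^k)" by (rule summable_comparison_test'[OF sg]) (use b in auto)
  show "(\<lambda>k. of_real (c k) * (of_real s :: complex)^k) sums of_real (\<Sum>k. c k * s^k)"
    using sums_of_real[OF summable_sums[OF sm]] by simp
qed

lemma B0_real: assumes "0 \<le> s" "s < R2"
  shows "Bfun q r f (of_real s) 0 = of_real (b0r s)" "b0r s \<ge> 0"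
proof -
  show "Bfun q r f (of_real s) 0 = of_real (b0r s)"
    unfolding Bfun_def Bcoef0_real b0r_def using real_ser(2)[OF bc_bound assms] by (simp add: sums_iff)
  show "b0r s \<ge> 0" unfolding b0r_def
    using real_ser(1)[OF bc_bound assms] bc_nonneg assms by (intro suminf_nonneg) auto
qed

lemma G0_real: assumes "0 \<le> s" "s < R2"
  shows "Gfun 0 (of_real s) = of_real (g0r s)" "g0r s \<ge> 0"
proof -
  show "Gfun 0 (of_real s) = of_real (g0r s)"
    unfolding Gfun_def eval_fps_def Gf_def Gcoef0_real g0r_def using real_ser(2)[OF gc_bound assms]
    by (simp add: sums_iff)
  show "g0r s \<ge> 0" unfolding g0r_def
    using real_ser(1)[OF gc_bound assms] gc_nonneg assms by (intro suminf_nonneg) auto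
qed

lemma B0_norm: assumes x: "norm x < R2" shows "norm (Bfun q r f x 0) \<le> b0r (norm x)"
proof -
  have sm: "summable (\<lambda>k. bc k * norm x ^ k)" using real_ser(1)[OF bc_bound, of "norm x"] x by simp
  have eq: "(\<lambda>k. norm (Bcoef q r f 0 k * x^k)) = (\<lambda>k. bc k * norm x ^ k)"
    unfolding Bcoef0_real using bc_nonneg by (simp add: norm_mult norm_power)
  have "norm (Bfun q r f x 0) \<le> (\<Sum>k. norm (Bcoef q r f 0 k * x^k))"
    unfolding Bfun_def by (rule summable_norm) (use sm eq in simp)
  thus ?thesis unfolding eq b0r_def .
qed

lemma Q0_real: assumes "0 \<le> s" "s < R2"
  shows "1 - s - s^r * b0r s = (1 + g0r s) * (1 - real q * s)"
proof -
  have "norm (of_real s :: complex) < R2" using assms by simp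
  from Q0_factor[OF this] have "Qfun 0 (of_real s) = (1 + Gfun 0 (of_real s)) * (1 - of_nat q * of_real s)" .
  hence "of_real (1 - s - s^r * b0r s) = (of_real ((1 + g0r s) * (1 - real q * s)) :: complex)"
    unfolding Qfun_def B0_real[OF assms] G0_real[OF assms] by simp
  thus ?thesis using of_real_eq_iff by blast
qed

lemma Q0_x0: "Qfun 0 (of_real x0) = 0"
proof -
  have "norm (of_real x0 :: complex) < R2" using x0_R2 by simp
  from Q0_factor[OF this] show ?thesis unfolding x0_def using qpos by simp
qed

lemma Q0_zero: assumes x: "norm x \<le> x0" and z: "Qfun 0 x = 0" shows "x = of_real x0"
proof -
  define s where "s = norm x"
  have s: "0 \<le> s" "s < R2" "s \<le> x0" using x x0_R2 unfolding s_def by auto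
  define W where "W = x^r * Bfun q r f x 0"
  have sum1: "x + W = 1" using z unfolding Qfun_def W_def by (simp add: algebra_simps)
  have "norm W \<le> s^r * b0r s"
    unfolding W_def s_def norm_mult norm_power using B0_norm s unfolding s_def
    by (intro mult_left_mono) auto
  moreover have "1 - s - s^r * b0r s \<ge> 0"
  proof -
    have "1 - real q * s \<ge> 0" using s unfolding x0_def using qpos by (simp add: field_simps)
    thus ?thesis using Q0_real[OF s(1,2)] G0_real(2)[OF s(1,2)] by simp
  qed
  ultimately have "norm x + norm W \<le> 1" unfolding s_def by linarith
  from complex_sum_one_real[OF sum1 this] have xr: "Im x = 0" "0 \<le> Re x" .
  hence xs: "x = of_real s" unfolding s_def by (simp add: complex_eq_iff cmod_def)
  have "of_real (1 - s - s^r * b0r s) = Qfun 0 x" unfolding xs Qfun_def B0_real[OF s(1,2)] by simp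
  hence "(of_real (1 - s - s^r * b0r s) :: complex) = of_real 0" using z by simp
  hence "1 - s - s^r * b0r s = 0" using of_real_eq_iff by blast
  hence "(1 + g0r s) * (1 - real q * s) = 0" using Q0_real[OF s(1,2)] by simp
  moreover have "1 + g0r s > 0" using G0_real(2)[OF s(1,2)] by simp
  ultimately have "1 - real q * s = 0" by simp
  hence "s = x0" unfolding x0_def using qpos by (simp add: field_simps)
  thus ?thesis using xs by simp
qed

end


lemma cauchy_deriv_bound:
  fixes f :: "complex \<Rightarrow> complex"
  assumes hol: "f holomorphic_on ball 0 Rbig" and w: "norm w + rc \<le> RR" and RR: "RR < Rbig" and rc: "rc > 0"
    and B: "\<And>x. norm x \<le> RR \<Longrightarrow> norm (f x) \<le> B"
  shows "norm ((deriv ^^ n) f w) \<le> fact n * B / rc ^ n"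
proof (rule Cauchy_inequality)
  have sub: "cball w rc \<subseteq> ball 0 Rbig"
  proof
    fix x assume "x \<in> cball w rc"
    hence "norm x \<le> norm w + rc" using norm_triangle_sub[of x w] by (auto simp: dist_norm norm_minus_commute)
    thus "x \<in> ball 0 Rbig" using w RR by simp
  qed
  show "f holomorphic_on ball w rc" using hol by (rule holomorphic_on_subset) (use sub in auto)
  show "continuous_on (cball w rc) f" using holomorphic_on_imp_continuous_on[OF hol] sub
    by (rule continuous_on_subset)
  show "0 < rc" by fact
  fix x assume "norm (w - x) = rc"
  hence "norm x \<le> RR" using w norm_triangle_sub[of x w] by (simp add: norm_minus_commute)
  thus "norm (f x) \<le> B" by (rule B)
qed

context S begin

definition R :: real where "R = (x0 + R2) / 2"
definition P1 :: real where "P1 = AA / (d0 * (1 - gam * R))"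
definition MQ :: real where "MQ = 2 + AA / (1 - gam * R)"

lemma R_bounds: "x0 < R" "R < R2" "R < 1" "gam * R < 1" "0 < R" "1 - gam * R > 0"
proof -
  show "x0 < R" "R < R2" unfolding R_def using x0_R2 by auto
  moreover have "R2 \<le> 1" unfolding R2_def using gam_bounds by simp
  ultimately show "R < 1" by simp
  show g: "gam * R < 1" using \<open>R < R2\<close> gam_bounds unfolding R2_def by (simp add: field_simps)
  show "0 < R" using x0_R2 \<open>x0 < R\<close> by simp
  show "1 - gam * R > 0" using g by simp
qed

lemma P1_pos: "P1 > 0" unfolding P1_def using AA_pos d0_pos R_bounds by simp

lemma Bfun_diff_bound: assumes t: "norm t \<le> d0" and x: "norm x \<le> R"
  shows "norm (Bfun q r f x t - Bfun q r f x 0) \<le> norm t * P1"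
proof -
  have g0: "gam \<ge> 0" using gam_bounds by simp
  have s1: "summable (\<lambda>k. Bcoef q r f t k * x^k)"
    using powser_bound(1)[OF Bcoef_bound[OF t] g0 x R_bounds(4)] .
  have s2: "summable (\<lambda>k. Bcoef q r f 0 k * x^k)"
    using powser_bound(1)[OF Bcoef_bound[OF t0_le] g0 x R_bounds(4)] .
  have "Bfun q r f x t - Bfun q r f x 0 = (\<Sum>k. (Bcoef q r f t k - Bcoef q r f 0 k) * x^k)"
    unfolding Bfun_def using suminf_diff[OF s1 s2] by (simp add: algebra_simps)
  also have "norm \<dots> \<le> (norm t / d0 * AA) / (1 - gam * R)"
    using Bcoef_diff[OF t] g0 x R_bounds(4) by (intro powser_bound(2)) (auto simp: mult.assoc)
  also have "\<dots> = norm t * P1" unfolding P1_def by simp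
  finally show ?thesis .
qed

lemma Gfun_diff_bound: assumes t: "norm t \<le> d0" and x: "norm x \<le> R"
  shows "norm (Gfun t x - Gfun 0 x) \<le> norm t * P1"
proof -
  have g0: "gam \<ge> 0" using gam_bounds by simp
  have s1: "summable (\<lambda>k. Gcoef t k * x^k)"
    using powser_bound(1)[OF Gcoef_bound[OF t] g0 x R_bounds(4)] .
  have s2: "summable (\<lambda>k. Gcoef 0 k * x^k)"
    using powser_bound(1)[OF Gcoef_bound[OF t0_le] g0 x R_bounds(4)] .
  have "Gfun t x - Gfun 0 x = (\<Sum>k. (Gcoef t k - Gcoef 0 k) * x^k)"
    unfolding Gfun_def eval_fps_def Gf_def using suminf_diff[OF s1 s2] by (simp add: algebra_simps)
  also have "norm \<dots> \<le> (norm t / d0 * AA) / (1 - gam * R)"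
    using Gcoef_diff[OF t] g0 x R_bounds(4) by (intro powser_bound(2)) (auto simp: mult.assoc)
  also have "\<dots> = norm t * P1" unfolding P1_def by simp
  finally show ?thesis .
qed

lemma Gfun_bound: assumes t: "norm t \<le> d0" and x: "norm x \<le> R"
  shows "norm (Gfun t x) \<le> AA / (1 - gam * R)"
  unfolding Gfun_def eval_fps_def Gf_def fps_nth_Abs_fps using gam_bounds
  by (intro powser_bound(2)[OF Gcoef_bound[OF t] _ x R_bounds(4)]) auto

lemma Bfun_bound: assumes t: "norm t \<le> d0" and x: "norm x \<le> R"
  shows "norm (Bfun q r f x t) \<le> AA / (1 - gam * R)"
  unfolding Bfun_def using gam_bounds
  by (intro powser_bound(2)[OF Bcoef_bound[OF t] _ x R_bounds(4)]) auto

lemma xr_le1: "norm (x::complex) \<le> R \<Longrightarrow> norm (x^r) \<le> 1"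
  using R_bounds by (simp add: norm_power power_le_one)

lemma Qfun_diff_bound: assumes t: "norm t \<le> d0" and x: "norm x \<le> R"
  shows "norm (Qfun t x - Qfun 0 x) \<le> norm t * P1"
proof -
  have "Qfun t x - Qfun 0 x = - (x^r * (Bfun q r f x t - Bfun q r f x 0))"
    unfolding Qfun_def by (simp add: algebra_simps)
  hence "norm (Qfun t x - Qfun 0 x) = norm (x^r) * norm (Bfun q r f x t - Bfun q r f x 0)"
    by (simp add: norm_mult)
  also have "\<dots> \<le> 1 * (norm t * P1)"
    using xr_le1[OF x] Bfun_diff_bound[OF t x] by (intro mult_mono) auto
  finally show ?thesis by simp
qed

lemma Qfun_bound: assumes t: "norm t \<le> d0" and x: "norm x \<le> R"
  shows "norm (Qfun t x) \<le> MQ"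
proof -
  have "norm (Qfun t x) \<le> norm (1 - x) + norm (x^r * Bfun q r f x t)"
    unfolding Qfun_def by (rule norm_triangle_ineq4)
  also have "norm (1 - x) \<le> 1 + norm x" by (rule norm_triangle_ineq4[of 1 x, simplified])
  also have "norm x \<le> 1" using x R_bounds by simp
  also have "norm (x^r * Bfun q r f x t) \<le> 1 * (AA / (1 - gam * R))"
    unfolding norm_mult using xr_le1[OF x] Bfun_bound[OF t x] by (intro mult_mono) auto
  finally show ?thesis unfolding MQ_def by simp
qed

lemma Qfun_eq: "Qfun t = (\<lambda>x. 1 - x - x^r * eval_fps (Bf t) x)"
  unfolding Qfun_def Bfun_eval by simp

lemma Qfun_holo: assumes t: "norm t \<le> d0" shows "Qfun t holomorphic_on ball 0 R2"
proof -
  have "ball 0 R2 \<subseteq> eball 0 (fps_conv_radius (Bf t))"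
    using radius_Bf[OF t] by (auto intro: ereal_lt_le)
  thus ?thesis unfolding Qfun_eq by (intro holomorphic_intros) auto
qed

lemma Gfun_holo: assumes t: "norm t \<le> d0" shows "Gfun t holomorphic_on ball 0 R2"
proof -
  have "ball 0 R2 \<subseteq> eball 0 (fps_conv_radius (Gf t))"
    using radius_Gf[OF t] by (auto intro: ereal_lt_le)
  thus ?thesis unfolding Gfun_def[abs_def] by (intro holomorphic_intros) auto
qed

definition dd :: complex where "dd = - of_nat q * (1 + Gfun 0 (of_real x0))"

lemma dd_deriv: "(Qfun 0 has_field_derivative dd) (at (of_real x0))"
proof -
  have x0b: "of_real x0 \<in> ball (0::complex) R2" using x0_R2 by simp
  have hg: "(Gfun 0 has_field_derivative deriv (Gfun 0) (of_real x0)) (at (of_real x0))"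
    using Gfun_holo[OF t0_le] x0b by (intro holomorphic_derivI) auto
  have "((\<lambda>x. (1 + Gfun 0 x) * (1 - of_nat q * x)) has_field_derivative
          deriv (Gfun 0) (of_real x0) * (1 - of_nat q * of_real x0) + (1 + Gfun 0 (of_real x0)) * (- of_nat q))
        (at (of_real x0))"
    by (rule derivative_eq_intros hg refl | simp)+
  moreover have "1 - of_nat q * (of_real x0 :: complex) = 0" unfolding x0_def using qpos by simp
  ultimately have "((\<lambda>x. (1 + Gfun 0 x) * (1 - of_nat q * x)) has_field_derivative dd) (at (of_real x0))"
    unfolding dd_def by (simp add: mult.commute)
  thus ?thesis
  proof (rule has_field_derivative_transform_within_open[where S="ball 0 R2"])
    show "open (ball (0::complex) R2)" by simp
    show "of_real x0 \<in> ball (0::complex) R2" by (rule x0b)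
    fix x :: complex assume "x \<in> ball 0 R2"
    thus "(1 + Gfun 0 x) * (1 - of_nat q * x) = Qfun 0 x" using Q0_factor by simp
  qed
qed

lemma dd_norm: "norm dd \<ge> 1"
proof -
  have "Gfun 0 (of_real x0) = of_real (g0r x0)" "g0r x0 \<ge> 0" using G0_real x0_R2 by auto
  moreover have "(1::complex) + of_real (g0r x0) = of_real (1 + g0r x0)" by simp
  ultimately have "norm (1 + Gfun 0 (of_real x0)) = 1 + g0r x0" by (simp only: norm_of_real)
  hence "norm dd = real q * (1 + g0r x0)" unfolding dd_def by (simp add: norm_mult)
  also have "\<dots> \<ge> 1 * 1" using qpos \<open>g0r x0 \<ge> 0\<close> by (intro mult_mono) auto
  finally show ?thesis by simp
qed

lemma dd_eq: "deriv (Qfun 0) (of_real x0) = dd" using dd_deriv by (rule DERIV_imp_deriv)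

end

context S begin

definition rc0 :: real where "rc0 = (R - x0) / 2"
definition eta :: real where "eta = min x0 (min rc0 (norm dd * rc0^2 / (8 * MQ)))"

lemma rc0_pos: "rc0 > 0" unfolding rc0_def using R_bounds by simp
lemma MQ_pos: "MQ > 0"
proof -
  have "AA / (1 - gam * R) > 0" using AA_pos R_bounds(6) by simp
  thus ?thesis unfolding MQ_def by simp
qed
lemma eta_pos: "eta > 0"
proof -
  have "norm dd * rc0^2 / (8 * MQ) > 0" using rc0_pos MQ_pos dd_norm by (intro divide_pos_pos mult_pos_pos) auto
  thus ?thesis unfolding eta_def using rc0_pos x0_R2 by simp
qed
lemma eta_le: "eta \<le> rc0" "eta \<le> x0" "eta * (2 * MQ / rc0^2) \<le> norm dd / 4"
proof -
  show "eta \<le> rc0" "eta \<le> x0" unfolding eta_def by auto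
  have "eta \<le> norm dd * rc0^2 / (8 * MQ)" unfolding eta_def by auto
  hence "eta * (2 * MQ / rc0^2) \<le> norm dd * rc0^2 / (8 * MQ) * (2 * MQ / rc0^2)"
    using MQ_pos rc0_pos by (intro mult_right_mono) auto
  also have "\<dots> = norm dd / 4" using MQ_pos rc0_pos by (simp add: field_simps)
  finally show "eta * (2 * MQ / rc0^2) \<le> norm dd / 4" .
qed

definition D :: "complex set" where "D = cball (of_real x0) eta"

lemma D_norm: "w \<in> D \<Longrightarrow> norm w + rc0 \<le> R"
proof -
  assume "w \<in> D"
  hence "norm (w - of_real x0) \<le> eta" unfolding D_def by (simp add: dist_norm norm_minus_commute)
  hence "norm w \<le> x0 + eta" using norm_triangle_sub[of w "of_real x0"] x0_R2 by simp
  moreover have "x0 + 2 * rc0 = R" unfolding rc0_def by (simp add: field_simps)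
  ultimately show ?thesis using eta_le(1) by linarith
qed

lemma D_R: "w \<in> D \<Longrightarrow> norm w \<le> R" using D_norm rc0_pos by fastforce

lemma Qholo0: "Qfun 0 holomorphic_on ball 0 R2" by (rule Qfun_holo[OF t0_le])

lemma D1: assumes w: "w \<in> D" shows "norm (deriv (Qfun 0) w - dd) \<le> norm dd / 4"
proof -
  have hd: "deriv (Qfun 0) holomorphic_on ball 0 R2" by (intro holomorphic_deriv Qholo0) simp
  have DB: "D \<subseteq> ball 0 R2" using D_R R_bounds by fastforce
  have "norm (deriv (Qfun 0) w - deriv (Qfun 0) (of_real x0)) \<le> (2 * MQ / rc0^2) * norm (w - of_real x0)"
  proof (rule field_differentiable_bound[where f'="deriv (deriv (Qfun 0))"])
    show "convex D" unfolding D_def by simp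
    fix z assume z: "z \<in> D"
    show "(deriv (Qfun 0) has_field_derivative deriv (deriv (Qfun 0)) z) (at z within D)"
      by (rule holomorphic_derivI[OF hd]) (use DB z in auto)
    have "norm ((deriv ^^ 2) (Qfun 0) z) \<le> fact 2 * MQ / rc0 ^ 2"
      using Qholo0 D_norm[OF z] R_bounds rc0_pos Qfun_bound[OF t0_le]
      by (intro cauchy_deriv_bound[where Rbig=R2 and RR=R and rc=rc0]) auto
    thus "norm (deriv (deriv (Qfun 0)) z) \<le> 2 * MQ / rc0^2" by (simp add: numeral_2_eq_2)
  qed (use w eta_pos in \<open>auto simp: D_def\<close>)
  also have "\<dots> \<le> (2 * MQ / rc0^2) * eta"
    using w MQ_pos unfolding D_def by (intro mult_left_mono) (auto simp: dist_norm norm_minus_commute)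
  also have "\<dots> \<le> norm dd / 4" using eta_le(3) by (simp add: mult.commute)
  finally show ?thesis using dd_eq by simp
qed

lemma D2: assumes t: "norm t \<le> d0" and w: "w \<in> D"
  shows "norm (deriv (Qfun t) w - deriv (Qfun 0) w) \<le> norm t * P1 / rc0"
proof -
  have wb: "w \<in> ball 0 R2" using D_R[OF w] R_bounds by simp
  have E: "(\<lambda>x. Qfun t x - Qfun 0 x) holomorphic_on ball 0 R2"
    using Qfun_holo[OF t] Qholo0 by (intro holomorphic_intros)
  have "norm ((deriv ^^ 1) (\<lambda>x. Qfun t x - Qfun 0 x) w) \<le> fact 1 * (norm t * P1) / rc0 ^ 1"
    using E D_norm[OF w] R_bounds rc0_pos Qfun_diff_bound[OF t]
    by (intro cauchy_deriv_bound[where Rbig=R2 and RR=R and rc=rc0]) auto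
  moreover have "deriv (\<lambda>x. Qfun t x - Qfun 0 x) w = deriv (Qfun t) w - deriv (Qfun 0) w"
    using Qfun_holo[OF t] Qholo0 wb
    by (intro deriv_diff) (auto intro: holomorphic_on_imp_differentiable_at)
  ultimately show ?thesis by simp
qed

definition K0 :: "complex set" where "K0 = cball 0 x0 \<inter> {x. eta / 2 \<le> dist x (of_real x0)}"

lemma m0_ex: "\<exists>m>0. \<forall>x\<in>K0. m \<le> norm (Qfun 0 x)"
proof -
  have comp: "compact K0" unfolding K0_def
    by (intro compact_Int_closed compact_cball closed_Collect_le continuous_intros)
  have "- of_real x0 \<in> K0" unfolding K0_def using eta_le x0_R2
    by (auto simp: dist_norm norm_minus_commute)
  hence ne: "K0 \<noteq> {}" by blast
  have sub: "K0 \<subseteq> ball 0 R2" unfolding K0_def using x0_R2 by auto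
  have cont: "continuous_on K0 (\<lambda>x. norm (Qfun 0 x))"
    using holomorphic_on_imp_continuous_on[OF Qholo0] sub
    by (intro continuous_on_norm) (rule continuous_on_subset)
  obtain xm where xm: "xm \<in> K0" "\<forall>y\<in>K0. norm (Qfun 0 xm) \<le> norm (Qfun 0 y)"
    using continuous_attains_inf[OF comp ne cont] by blast
  have "Qfun 0 xm \<noteq> 0"
  proof
    assume "Qfun 0 xm = 0"
    moreover have "norm xm \<le> x0" using xm(1) unfolding K0_def by auto
    ultimately have "xm = of_real x0" using Q0_zero by blast
    thus False using xm(1) eta_pos unfolding K0_def by auto
  qed
  thus ?thesis using xm by (intro exI[of _ "norm (Qfun 0 xm)"]) auto
qed

definition m0 :: real where "m0 = (SOME m. m > 0 \<and> (\<forall>x\<in>K0. m \<le> norm (Qfun 0 x)))"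

lemma m0: "m0 > 0" "\<And>x. x \<in> K0 \<Longrightarrow> m0 \<le> norm (Qfun 0 x)"
  using someI_ex[OF m0_ex[unfolded Bex_def[symmetric]]] unfolding m0_def
  by (smt (verit) someI_ex m0_ex)+

lemma theta_ex: "\<exists>th>0. th \<le> eta / 2 \<and> th \<le> rc0 \<and> th \<le> x0 \<and>
   (\<forall>x y. norm x \<le> R \<and> norm y \<le> R \<and> dist x y \<le> th \<longrightarrow>
      dist (Qfun 0 x) (Qfun 0 y) < m0 / 2 \<and> dist (Gfun 0 x) (Gfun 0 y) < 1/4)"
proof -
  have sub: "cball 0 R \<subseteq> ball (0::complex) R2" using R_bounds by auto
  have uq: "uniformly_continuous_on (cball 0 R) (Qfun 0)"
    using holomorphic_on_imp_continuous_on[OF Qholo0] sub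
    by (intro compact_uniformly_continuous) (auto intro: continuous_on_subset)
  have ug: "uniformly_continuous_on (cball 0 R) (Gfun 0)"
    using holomorphic_on_imp_continuous_on[OF Gfun_holo[OF t0_le]] sub
    by (intro compact_uniformly_continuous) (auto intro: continuous_on_subset)
  obtain e1 where e1: "e1 > 0" "\<forall>x\<in>cball 0 R. \<forall>x'\<in>cball 0 R. dist x' x < e1 \<longrightarrow> dist (Qfun 0 x') (Qfun 0 x) < m0/2"
    using uq[unfolded uniformly_continuous_on_def, rule_format, of "m0/2"] m0(1) by auto
  obtain e2 where e2: "e2 > 0" "\<forall>x\<in>cball 0 R. \<forall>x'\<in>cball 0 R. dist x' x < e2 \<longrightarrow> dist (Gfun 0 x') (Gfun 0 x) < 1/4"
    using ug[unfolded uniformly_continuous_on_def, rule_format, of "1/4"] by auto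
  define th where "th = min (min e1 e2 / 2) (min (eta/2) (min rc0 x0))"
  have "th > 0" unfolding th_def using e1 e2 eta_pos rc0_pos x0_R2 by simp
  moreover have "\<forall>x y. norm x \<le> R \<and> norm y \<le> R \<and> dist x y \<le> th \<longrightarrow>
      dist (Qfun 0 x) (Qfun 0 y) < m0 / 2 \<and> dist (Gfun 0 x) (Gfun 0 y) < 1/4"
  proof (intro allI impI)
    fix x y :: complex assume h: "norm x \<le> R \<and> norm y \<le> R \<and> dist x y \<le> th"
    hence "dist x y < e1" "dist x y < e2" unfolding th_def using e1 e2 by auto
    thus "dist (Qfun 0 x) (Qfun 0 y) < m0 / 2 \<and> dist (Gfun 0 x) (Gfun 0 y) < 1/4"
      using e1(2) e2(2) h by auto
  qed
  moreover have "th \<le> eta / 2" "th \<le> rc0" "th \<le> x0" unfolding th_def by auto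
  ultimately show ?thesis by blast
qed

definition th :: real where "th = (SOME th. th>0 \<and> th \<le> eta / 2 \<and> th \<le> rc0 \<and> th \<le> x0 \<and>
   (\<forall>x y. norm x \<le> R \<and> norm y \<le> R \<and> dist x y \<le> th \<longrightarrow>
      dist (Qfun 0 x) (Qfun 0 y) < m0 / 2 \<and> dist (Gfun 0 x) (Gfun 0 y) < 1/4))"

lemma th: "th > 0" "th \<le> eta / 2" "th \<le> rc0" "th \<le> x0"
  "\<And>x y. norm x \<le> R \<Longrightarrow> norm y \<le> R \<Longrightarrow> dist x y \<le> th \<Longrightarrow> dist (Qfun 0 x) (Qfun 0 y) < m0 / 2"
  "\<And>x y. norm x \<le> R \<Longrightarrow> norm y \<le> R \<Longrightarrow> dist x y \<le> th \<Longrightarrow> dist (Gfun 0 x) (Gfun 0 y) < 1/4"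
  using someI_ex[OF theta_ex] unfolding th_def[symmetric] by blast+

lemma region0: assumes x: "norm x \<le> x0 + th" and xd: "x \<notin> D"
  shows "norm (Qfun 0 x) \<ge> m0 / 2"
proof -
  have dx: "dist x (of_real x0) > eta" using xd unfolding D_def by (simp add: dist_commute)
  show ?thesis
  proof (cases "norm x \<le> x0")
    case True
    hence "x \<in> K0" unfolding K0_def using dx eta_pos by auto
    thus ?thesis using m0 by fastforce
  next
    case False
    hence xpos: "norm x > x0" by simp
    define y where "y = x * of_real (x0 / norm x)"
    have "norm y = norm x * \<bar>x0 / norm x\<bar>" unfolding y_def norm_mult norm_of_real ..
    also have "\<bar>x0 / norm x\<bar> = x0 / norm x" using x0_R2 xpos by simp
    finally have "norm y = norm x * (x0 / norm x)" .
    moreover have "x \<noteq> 0" using xpos x0_R2 by auto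
    ultimately have ny: "norm y = x0" using xpos x0_R2 by simp
    have "x - y = x * of_real (1 - x0 / norm x)" unfolding y_def by (simp add: algebra_simps)
    hence "norm (x - y) = norm x * \<bar>1 - x0 / norm x\<bar>" by (simp only: norm_mult norm_of_real)
    also have "\<bar>1 - x0 / norm x\<bar> = 1 - x0 / norm x"
    proof -
      have "x0 / norm x \<le> 1" using xpos x0_R2 by (simp add: divide_le_eq_1)
      thus ?thesis by simp
    qed
    also have "norm x * (1 - x0 / norm x) = norm x - x0" using xpos x0_R2 by (auto simp: field_simps)
    finally have dxy: "dist x y = norm x - x0" by (simp add: dist_norm)
    hence dxy': "dist x y \<le> th" using x by simp
    have "dist y (of_real x0) \<ge> dist x (of_real x0) - dist x y" using dist_triangle[of x "of_real x0" y]
      by (simp add: dist_commute)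
    hence "dist y (of_real x0) \<ge> eta / 2" using dx dxy' th(2) by linarith
    hence "y \<in> K0" unfolding K0_def using ny by simp
    hence "m0 \<le> norm (Qfun 0 y)" using m0 by blast
    moreover have "dist (Qfun 0 x) (Qfun 0 y) < m0 / 2"
      using th(5)[OF _ _ dxy'] x ny th(3) R_bounds unfolding rc0_def by simp
    ultimately show ?thesis using norm_triangle_sub[of "Qfun 0 y" "Qfun 0 x"]
      by (simp add: dist_norm norm_minus_commute)
  qed
qed

end

context S begin

definition Xc :: real where
  "Xc = min (norm dd * rc0) (min (norm dd * eta) (min (norm dd * th / 2) (min m0 1)))"
definition del1 :: real where "del1 = min d0 (Xc / (4 * P1))"

lemma tri: "norm ((a::complex) - c) \<le> norm (a - b) + norm (b - c)"
proof -
  have "a - c = (a - b) + (b - c)" by simp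
  thus ?thesis by (metis norm_triangle_ineq)
qed

lemma Xc_pos: "Xc > 0"
proof -
  have "norm dd > 0" using dd_norm by linarith
  thus ?thesis unfolding Xc_def using rc0_pos eta_pos th(1) m0(1) by simp
qed
lemma del1_pos: "del1 > 0" unfolding del1_def using d0_pos Xc_pos P1_pos by simp

lemma tP: assumes "norm t \<le> del1" shows "norm t \<le> d0" "norm t * P1 \<le> Xc / 4"
proof -
  show "norm t \<le> d0" using assms unfolding del1_def by simp
  have "norm t \<le> Xc / (4 * P1)" using assms unfolding del1_def by simp
  hence "norm t * P1 \<le> Xc / (4 * P1) * P1" using P1_pos by (intro mult_right_mono) auto
  thus "norm t * P1 \<le> Xc / 4" using P1_pos by simp
qed

lemma tP': assumes "norm t \<le> del1"
  shows "norm t * P1 \<le> norm dd * rc0 / 4" "norm t * P1 \<le> norm dd * eta / 4"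
    "norm t * P1 \<le> norm dd * th / 8" "norm t * P1 \<le> m0 / 4" "norm t * P1 \<le> 1/4"
  using tP(2)[OF assms] unfolding Xc_def by auto

lemma D_sub: "D \<subseteq> ball 0 R2" using D_R R_bounds by fastforce

lemma deriv_close: assumes t: "norm t \<le> del1" and w: "w \<in> D"
  shows "norm (deriv (Qfun t) w - dd) \<le> norm dd / 2"
proof -
  have "norm (deriv (Qfun t) w - dd) \<le> norm (deriv (Qfun t) w - deriv (Qfun 0) w) + norm (deriv (Qfun 0) w - dd)"
    by (rule tri)
  also have "norm (deriv (Qfun t) w - deriv (Qfun 0) w) \<le> norm t * P1 / rc0" by (rule D2[OF tP(1)[OF t] w])
  also have "norm t * P1 / rc0 \<le> norm dd / 4" using tP'(1)[OF t] rc0_pos by (simp add: field_simps)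
  also have "norm (deriv (Qfun 0) w - dd) \<le> norm dd / 4" by (rule D1[OF w])
  finally show ?thesis by simp
qed

definition Phi :: "complex \<Rightarrow> complex \<Rightarrow> complex" where "Phi t x = x - Qfun t x / dd"

lemma dd_nz: "dd \<noteq> 0" using dd_norm by auto

lemma contraction: assumes t: "norm t \<le> del1" and x: "x \<in> D" and y: "y \<in> D"
  shows "norm (Phi t x - Phi t y) \<le> 1/2 * norm (x - y)"
proof (rule field_differentiable_bound[where f'="\<lambda>w. 1 - deriv (Qfun t) w / dd"])
  show "convex D" unfolding D_def by simp
  fix z assume z: "z \<in> D"
  have "(Qfun t has_field_derivative deriv (Qfun t) z) (at z within D)"
    by (rule holomorphic_derivI[OF Qfun_holo[OF tP(1)[OF t]]]) (use D_sub z in auto)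
  thus "(Phi t has_field_derivative 1 - deriv (Qfun t) z / dd) (at z within D)"
    unfolding Phi_def[abs_def] using dd_nz by (auto intro!: derivative_eq_intros)
  have "1 - deriv (Qfun t) z / dd = (dd - deriv (Qfun t) z) / dd" using dd_nz by (simp add: field_simps)
  hence "norm (1 - deriv (Qfun t) z / dd) = norm (deriv (Qfun t) z - dd) / norm dd"
    by (simp add: norm_divide norm_minus_commute)
  also have "\<dots> \<le> (norm dd / 2) / norm dd" using deriv_close[OF t z] dd_norm by (intro divide_right_mono) auto
  also have "\<dots> = 1/2" using dd_nz by simp
  finally show "norm (1 - deriv (Qfun t) z / dd) \<le> 1/2" .
qed (use x y in auto)

lemma x0D: "of_real x0 \<in> D" unfolding D_def using eta_pos by simp

lemma Qx0_small: assumes t: "norm t \<le> d0" shows "norm (Qfun t (of_real x0)) \<le> norm t * P1"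
  using Qfun_diff_bound[OF t, of "of_real x0"] Q0_x0 R_bounds x0_R2 by simp

lemma Phi_x0: assumes t: "norm t \<le> del1" shows "norm (Phi t (of_real x0) - of_real x0) \<le> norm t * P1 / norm dd"
  unfolding Phi_def using Qx0_small[OF tP(1)[OF t]] dd_nz by (simp add: norm_divide divide_right_mono)

lemma Phi_maps: assumes t: "norm t \<le> del1" and x: "x \<in> D" shows "Phi t x \<in> D"
proof -
  have "norm (Phi t x - of_real x0) \<le> norm (Phi t x - Phi t (of_real x0)) + norm (Phi t (of_real x0) - of_real x0)"
    by (rule tri)
  also have "\<dots> \<le> 1/2 * norm (x - of_real x0) + norm t * P1 / norm dd"
    using contraction[OF t x x0D] Phi_x0[OF t] by (rule add_mono)
  also have "norm (x - of_real x0) \<le> eta" using x unfolding D_def by (simp add: dist_norm norm_minus_commute)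
  also have "norm t * P1 / norm dd \<le> eta / 4"
  proof -
    have p: "norm dd > 0" using dd_norm by linarith
    have "norm t * P1 \<le> eta / 4 * norm dd" using tP'(2)[OF t] by (simp add: mult.commute)
    thus ?thesis using p by (simp add: pos_divide_le_eq)
  qed
  finally show ?thesis unfolding D_def using eta_pos by (simp add: dist_norm norm_minus_commute)
qed

lemma fix_ex: assumes t: "norm t \<le> del1" shows "\<exists>!a. a \<in> D \<and> Qfun t a = 0"
proof -
  have "\<exists>!a\<in>D. Phi t a = a"
  proof (rule Banach_fix[of D "1/2"])
    show "complete D" unfolding D_def by (simp add: complete_eq_closed)
    show "D \<noteq> {}" using x0D by blast
    show "Phi t ` D \<subseteq> D" using Phi_maps[OF t] by blast
    show "dist (Phi t x) (Phi t y) \<le> 1/2 * dist x y" if "x \<in> D" "y \<in> D" for x y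
      using contraction[OF t that] by (simp add: dist_norm)
  qed auto
  moreover have "Phi t a = a \<longleftrightarrow> Qfun t a = 0" for a unfolding Phi_def using dd_nz by simp
  ultimately show ?thesis by auto
qed

definition alpha :: "complex \<Rightarrow> complex" where "alpha t = (THE a. a \<in> D \<and> Qfun t a = 0)"

lemma alpha: assumes t: "norm t \<le> del1" shows "alpha t \<in> D" "Qfun t (alpha t) = 0"
  using theI'[OF fix_ex[OF t]] unfolding alpha_def by auto

lemma Q_lower_D: assumes t: "norm t \<le> del1" and x: "x \<in> D"
  shows "norm (Qfun t x) \<ge> norm dd / 2 * norm (x - alpha t)"
proof -
  have "x - alpha t = (Phi t x - Phi t (alpha t)) + Qfun t x / dd"
    unfolding Phi_def using alpha(2)[OF t] by simp
  hence "norm (x - alpha t) \<le> norm (Phi t x - Phi t (alpha t)) + norm (Qfun t x / dd)"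
    by (metis norm_triangle_ineq)
  also have "\<dots> \<le> 1/2 * norm (x - alpha t) + norm (Qfun t x) / norm dd"
    using contraction[OF t x alpha(1)[OF t]] by (simp add: norm_divide)
  finally have "norm (x - alpha t) / 2 \<le> norm (Qfun t x) / norm dd" by linarith
  moreover have "norm dd > 0" using dd_norm by linarith
  ultimately have "norm (x - alpha t) / 2 * norm dd \<le> norm (Qfun t x)" by (simp add: pos_le_divide_eq)
  thus ?thesis by (simp add: mult.commute)
qed

lemma alpha_close: assumes t: "norm t \<le> del1" shows "norm (alpha t - of_real x0) \<le> th / 4"
proof -
  have "norm (alpha t - of_real x0) \<le> norm (Phi t (alpha t) - Phi t (of_real x0)) + norm (Phi t (of_real x0) - of_real x0)"
  proof -
    have "Phi t (alpha t) = alpha t" unfolding Phi_def using alpha(2)[OF t] by simp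
    thus ?thesis using tri[of "Phi t (alpha t)" "of_real x0" "Phi t (of_real x0)"]
      by simp
  qed
  also have "\<dots> \<le> 1/2 * norm (alpha t - of_real x0) + norm t * P1 / norm dd"
    using contraction[OF t alpha(1)[OF t] x0D] Phi_x0[OF t] by (rule add_mono)
  finally have "norm (alpha t - of_real x0) \<le> 2 * (norm t * P1 / norm dd)" by linarith
  also have "\<dots> \<le> th / 4"
  proof -
    have p: "norm dd > 0" using dd_norm by linarith
    have "norm t * P1 \<le> th / 8 * norm dd" using tP'(3)[OF t] by (simp add: mult.commute)
    hence "norm t * P1 / norm dd \<le> th / 8" using p by (simp add: pos_divide_le_eq)
    thus ?thesis by linarith
  qed
  finally show ?thesis .
qed

lemma alpha_norm: assumes t: "norm t \<le> del1"
  shows "norm (alpha t) \<le> x0 + th / 4" "norm (alpha t) \<ge> x0 - th / 4" "norm (alpha t) \<ge> x0 / 2"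
    "alpha t \<noteq> 0"
proof -
  have c: "norm (alpha t - of_real x0) \<le> th / 4" by (rule alpha_close[OF t])
  show "norm (alpha t) \<le> x0 + th / 4" using c norm_triangle_sub[of "alpha t" "of_real x0"] x0_R2 by simp
  show a: "norm (alpha t) \<ge> x0 - th / 4" using c norm_triangle_sub[of "of_real x0" "alpha t"] x0_R2
    by (simp add: norm_minus_commute)
  thus "norm (alpha t) \<ge> x0 / 2" using th(4) x0_R2 by linarith
  thus "alpha t \<noteq> 0" using x0_R2 by auto
qed

lemma region_t: assumes t: "norm t \<le> del1" and x: "norm x \<le> x0 + th" and xd: "x \<notin> D"
  shows "norm (Qfun t x) \<ge> m0 / 4"
proof -
  have xR: "norm x \<le> R" using x th(3) unfolding rc0_def using R_bounds by simp
  have "norm (Qfun 0 x) \<ge> m0 / 2" by (rule region0[OF x xd])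
  moreover have "norm (Qfun t x - Qfun 0 x) \<le> m0 / 4" using Qfun_diff_bound[OF tP(1)[OF t] xR] tP'(4)[OF t] by simp
  ultimately show ?thesis using norm_triangle_sub[of "Qfun 0 x" "Qfun t x"] by (simp add: norm_minus_commute)
qed

lemma alpha_unique: assumes t: "norm t \<le> del1" and x: "norm x \<le> x0 + th" and z: "Qfun t x = 0"
  shows "x = alpha t"
proof -
  have "x \<in> D" using region_t[OF t x] z m0(1) by (cases "x \<in> D") auto
  hence "norm dd / 2 * norm (x - alpha t) \<le> 0" using Q_lower_D[OF t] z by fastforce
  moreover have "norm dd / 2 > 0" using dd_norm by linarith
  ultimately have "norm (x - alpha t) \<le> 0" by (simp add: mult_le_0_iff)
  thus ?thesis by simp
qed

lemma onepG: assumes t: "norm t \<le> del1" shows "norm (1 + Gfun t (alpha t)) \<ge> 1/2"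
proof -
  have aR: "norm (alpha t) \<le> R" using alpha_norm(1)[OF t] th(3) R_bounds unfolding rc0_def by simp
  have x0R: "norm (of_real x0 :: complex) \<le> R" using R_bounds x0_R2 by simp
  have "Gfun 0 (of_real x0) = of_real (g0r x0)" "g0r x0 \<ge> 0" using G0_real x0_R2 by auto
  moreover have "(1::complex) + of_real (g0r x0) = of_real (1 + g0r x0)" by simp
  ultimately have n1: "norm (1 + Gfun 0 (of_real x0)) \<ge> 1" by (simp only: norm_of_real)
  have "dist (Gfun 0 (alpha t)) (Gfun 0 (of_real x0)) < 1/4"
    using th(6)[OF aR x0R] alpha_close[OF t] th(1) by (simp add: dist_norm)
  moreover have "norm (Gfun t (alpha t) - Gfun 0 (alpha t)) \<le> 1/4"
    using Gfun_diff_bound[OF tP(1)[OF t] aR] tP'(5)[OF t] by simp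
  ultimately have "norm (Gfun t (alpha t) - Gfun 0 (of_real x0)) \<le> 1/2"
    using tri[of "Gfun t (alpha t)" "Gfun 0 (of_real x0)" "Gfun 0 (alpha t)"]
    by (simp add: dist_norm)
  thus ?thesis using n1 norm_triangle_sub[of "1 + Gfun 0 (of_real x0)" "1 + Gfun t (alpha t)"]
    by (simp add: norm_minus_commute)
qed

end

context S begin

definition A1c :: real where "A1c = AA + 1"
definition SB :: real where "SB = (A1c / (1 - gam * R)) / (1 - gam * R)"

lemma qc_bound: "norm (Qf t $ j) \<le> A1c * gam ^ j" if t: "norm t \<le> d0" for t j
proof -
  have g1: "gam ^ j \<ge> 1" using gam_bounds by simp
  have e: "Qf t $ j = (if j = 0 then 1 else 0) - (if j = 1 then 1 else 0) - (if j < r then 0 else Bcoef q r f t (j - r))"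
    unfolding Qf_def by (simp add: fps_X_power_mult_nth Bf_def fps_X_nth)
  have b2: "norm (if j < r then 0 else Bcoef q r f t (j - r)) \<le> AA * gam ^ j"
  proof (cases "j < r")
    case True thus ?thesis using AA_pos g1 by simp
  next
    case False
    have "norm (Bcoef q r f t (j - r)) \<le> AA * gam ^ (j - r)" by (rule Bcoef_bound[OF t])
    also have "\<dots> \<le> AA * gam ^ j" using gam_bounds AA_pos by (intro mult_left_mono power_increasing) auto
    finally show ?thesis using False by simp
  qed
  have "norm ((if j = 0 then 1 else 0) - (if j = 1 then 1 else 0) :: complex) \<le> 1" by auto
  hence "norm (Qf t $ j) \<le> 1 + AA * gam ^ j" unfolding e using b2 norm_triangle_ineq4
    by (smt (verit, ccfv_threshold))
  also have "\<dots> \<le> gam ^ j + AA * gam ^ j" using g1 by simp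
  finally show ?thesis unfolding A1c_def by (simp add: algebra_simps)
qed

definition Geo :: "complex \<Rightarrow> complex fps" where "Geo t = Abs_fps (\<lambda>k. inverse (alpha t) ^ k)"
definition Sf :: "complex \<Rightarrow> complex fps" where "Sf t = Qf t * Geo t"
definition Sfun :: "complex \<Rightarrow> complex \<Rightarrow> complex" where "Sfun t x = eval_fps (Sf t) x"

lemma alpha_R: assumes t: "norm t \<le> del1" shows "norm (alpha t) \<le> R" "norm (alpha t) < R2"
proof -
  show "norm (alpha t) \<le> R" using alpha_norm(1)[OF t] th(3) R_bounds unfolding rc0_def by simp
  thus "norm (alpha t) < R2" using R_bounds by simp
qed

lemma Q_sums: assumes t: "norm t \<le> del1" shows "(\<lambda>j. Qf t $ j * alpha t ^ j) sums 0"
proof -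
  have tt: "norm t \<le> d0" using tP(1)[OF t] .
  have "ereal (norm (alpha t)) < fps_conv_radius (Qf t)" using alpha_R(2)[OF t] radius_Qf[OF tt] by (intro ereal_lt_le)
  hence "(\<lambda>j. Qf t $ j * alpha t ^ j) sums eval_fps (Qf t) (alpha t)" by (rule sums_eval_fps)
  also have "eval_fps (Qf t) (alpha t) = 0" using Qf_eval[OF tt alpha_R(2)[OF t]] alpha(2)[OF t] by simp
  finally show ?thesis .
qed

lemma Sf_coef: assumes t: "norm t \<le> del1"
  shows "Sf t $ k = - (inverse (alpha t) ^ k * alpha t ^ (k+1) * (\<Sum>j. Qf t $ (j + (k+1)) * alpha t ^ j))"
proof -
  let ?a = "alpha t" and ?c = "inverse (alpha t)"
  have anz: "?a \<noteq> 0" using alpha_norm(4)[OF t] .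
  have sm: "summable (\<lambda>j. Qf t $ j * ?a ^ j)" using Q_sums[OF t] by (rule sums_summable)
  have "Sf t $ k = (\<Sum>i=0..k. Qf t $ i * ?c ^ (k - i))" unfolding Sf_def Geo_def by (simp add: fps_mult_nth)
  also have "\<dots> = ?c ^ k * (\<Sum>i=0..k. Qf t $ i * ?a ^ i)"
    unfolding sum_distrib_left
  proof (rule sum.cong[OF refl])
    fix i assume "i \<in> {0..k}"
    hence "?c ^ (k - i) = ?c ^ k * ?a ^ i" using anz by (simp add: power_diff field_simps power_inverse)
    thus "Qf t $ i * ?c ^ (k - i) = ?c ^ k * (Qf t $ i * ?a ^ i)" by simp
  qed
  also have "(\<Sum>i=0..k. Qf t $ i * ?a ^ i) = (\<Sum>i<k+1. Qf t $ i * ?a ^ i)"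
    by (intro sum.cong) auto
  also have "\<dots> = - (\<Sum>j. Qf t $ (j + (k+1)) * ?a ^ (j + (k+1)))"
  proof -
    have "(\<Sum>j. Qf t $ j * ?a ^ j) = (\<Sum>j. Qf t $ (j + (k+1)) * ?a ^ (j + (k+1))) + (\<Sum>i<k+1. Qf t $ i * ?a ^ i)"
      by (rule suminf_split_initial_segment[OF sm])
    moreover have "(\<Sum>j. Qf t $ j * ?a ^ j) = 0" using sums_unique[OF Q_sums[OF t]] by simp
    ultimately show ?thesis by (simp add: eq_neg_iff_add_eq_0 add.commute)
  qed
  also have "(\<Sum>j. Qf t $ (j + (k+1)) * ?a ^ (j + (k+1))) = ?a ^ (k+1) * (\<Sum>j. Qf t $ (j + (k+1)) * ?a ^ j)"
  proof -
    have "summable (\<lambda>j. Qf t $ (j + (k+1)) * ?a ^ j)"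
    proof -
      have "summable (\<lambda>j. Qf t $ (j + (k+1)) * ?a ^ (j + (k+1)))"
        using summable_ignore_initial_segment[OF sm, of "k+1"] by simp
      hence "summable (\<lambda>j. inverse (?a ^ (k+1)) * (Qf t $ (j + (k+1)) * ?a ^ (j + (k+1))))"
        by (rule summable_mult)
      thus ?thesis using anz by (simp add: power_add field_simps)
    qed
    hence "(\<Sum>j. ?a ^ (k+1) * (Qf t $ (j + (k+1)) * ?a ^ j)) = ?a ^ (k+1) * (\<Sum>j. Qf t $ (j + (k+1)) * ?a ^ j)"
      by (rule suminf_mult)
    thus ?thesis by (simp add: power_add mult_ac)
  qed
  finally show ?thesis by simp
qed

lemma Sf_bound: assumes t: "norm t \<le> del1" shows "norm (Sf t $ k) \<le> (A1c / (1 - gam * R)) * gam ^ k"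
proof -
  let ?a = "alpha t"
  have tt: "norm t \<le> d0" using tP(1)[OF t] .
  have anz: "?a \<noteq> 0" using alpha_norm(4)[OF t] .
  have aR: "norm ?a \<le> R" using alpha_R(1)[OF t] .
  have g0: "gam \<ge> 0" using gam_bounds by simp
  have cb: "norm (Qf t $ (j + (k+1))) \<le> (A1c * gam ^ (k+1)) * gam ^ j" for j
    using qc_bound[OF tt, of "j + (k+1)"] by (simp add: power_add mult_ac)
  have "norm (\<Sum>j. Qf t $ (j + (k+1)) * ?a ^ j) \<le> (A1c * gam ^ (k+1)) / (1 - gam * R)"
    by (rule powser_bound(2)[OF cb g0 aR R_bounds(4)])
  hence "norm (Sf t $ k) \<le> norm (inverse ?a) ^ k * norm ?a ^ (k+1) * ((A1c * gam ^ (k+1)) / (1 - gam * R))"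
    unfolding Sf_coef[OF t] norm_minus_cancel norm_mult norm_power
    by (intro mult_left_mono) auto
  also have "norm (inverse ?a) ^ k * norm ?a ^ (k+1) = (inverse (norm ?a) * norm ?a) ^ k * norm ?a"
    by (simp add: norm_inverse power_mult_distrib)
  also have "\<dots> = norm ?a" using anz by simp
  also have "norm ?a * ((A1c * gam ^ (k+1)) / (1 - gam * R)) = (gam * norm ?a) * (A1c / (1 - gam * R)) * gam ^ k"
    by (simp add: field_simps)
  also have "\<dots> \<le> 1 * (A1c / (1 - gam * R)) * gam ^ k"
  proof (intro mult_right_mono)
    have "gam * norm ?a \<le> gam * R" using aR g0 by (intro mult_left_mono)
    thus "gam * norm ?a \<le> 1" using R_bounds by simp
    show "0 \<le> A1c / (1 - gam * R)" unfolding A1c_def using AA_pos R_bounds by simp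
  qed (use g0 in auto)
  finally show ?thesis by simp
qed

lemma radius_Sf: assumes t: "norm t \<le> del1" shows "ereal R2 \<le> fps_conv_radius (Sf t)"
  unfolding fps_conv_radius_def R2_def using Sf_bound[OF t] gam_bounds
  by (intro radius_ge[where A="A1c / (1 - gam * R)"]) auto

lemma Sfun_bound: assumes t: "norm t \<le> del1" and x: "norm x \<le> R" shows "norm (Sfun t x) \<le> SB"
  unfolding Sfun_def eval_fps_def SB_def using gam_bounds
  by (intro powser_bound(2)[OF Sf_bound[OF t] _ x R_bounds(4)]) auto

lemma Geo_inv: assumes t: "norm t \<le> del1"
  shows "Geo t * (1 - fps_const (inverse (alpha t)) * fps_X) = 1"
proof (rule fps_ext)
  fix n show "(Geo t * (1 - fps_const (inverse (alpha t)) * fps_X)) $ n = 1 $ n"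
  proof (cases n)
    case 0 thus ?thesis unfolding Geo_def by simp
  next
    case (Suc m)
    have "(Geo t * (1 - fps_const (inverse (alpha t)) * fps_X)) $ n
        = Geo t $ n - inverse (alpha t) * Geo t $ m"
      using Suc by (simp add: algebra_simps fps_mult_fps_X_commute[symmetric] mult.assoc)
    also have "\<dots> = 0" unfolding Geo_def using Suc by simp
    finally show ?thesis using Suc by simp
  qed
qed

lemma Sf_Q: assumes t: "norm t \<le> del1"
  shows "Sf t * (1 - fps_const (inverse (alpha t)) * fps_X) = Qf t"
  unfolding Sf_def using Geo_inv[OF t] by (simp add: mult.assoc)

lemma rad_lin: "fps_conv_radius (1 - fps_const (c::complex) * fps_X) = \<infinity>"
proof (cases "c = 0")
  case True thus ?thesis by simp
next
  case False
  hence "fps_conv_radius (fps_const c * fps_X) = \<infinity>" by (subst fps_conv_radius_cmult_left) auto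
  thus ?thesis using fps_conv_radius_diff[of 1 "fps_const c * fps_X"] by simp
qed

lemma rad_lin2: "fps_conv_radius (fps_const (c::complex) * fps_X) = \<infinity>"
  by (cases "c = 0") (simp_all add: fps_conv_radius_cmult_left)

lemma Sfun_Q: assumes t: "norm t \<le> del1" and x: "norm x < R2"
  shows "Sfun t x * (1 - inverse (alpha t) * x) = Qfun t x"
proof -
  have xs: "ereal (norm x) < fps_conv_radius (Sf t)" using radius_Sf[OF t] x by (intro ereal_lt_le)
  have "Qfun t x = eval_fps (Qf t) x" using Qf_eval[OF tP(1)[OF t] x] by simp
  also have "\<dots> = eval_fps (Sf t) x * eval_fps (1 - fps_const (inverse (alpha t)) * fps_X) x"
    unfolding Sf_Q[OF t, symmetric] using xs rad_lin by (subst eval_fps_mult) auto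
  also have "eval_fps (1 - fps_const (inverse (alpha t)) * fps_X) x = 1 - inverse (alpha t) * x"
    using rad_lin2 by (subst eval_fps_diff) (auto simp: eval_fps_mult)
  finally show ?thesis unfolding Sfun_def by simp
qed

end

context S begin

definition rho :: real where "rho = x0 + th / 2"
definition SL :: real where "SL = (x0 / 2) * min (m0 / 4) (th / 8) / (2 * R)"
definition GB :: real where "GB = 1 + AA / (1 - gam * R)"
definition MT :: real where "MT = GB / SL"

lemma rho_bounds: "0 < rho" "rho < x0 + th" "x0 + th \<le> R" "rho \<le> R"
proof -
  show "0 < rho" unfolding rho_def using x0_R2 th by simp
  show "rho < x0 + th" unfolding rho_def using th by simp
  show "x0 + th \<le> R" using th(3) th(1) R_bounds(1) unfolding rc0_def by (simp add: field_simps)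
  thus "rho \<le> R" unfolding rho_def using th by simp
qed

lemma SL_pos: "SL > 0" unfolding SL_def using x0_R2 m0(1) th(1) R_bounds by simp
lemma GB_pos: "GB > 0" unfolding GB_def using AA_pos R_bounds by (simp add: add_pos_nonneg)

lemma Sfun_holo: assumes t: "norm t \<le> del1" shows "Sfun t holomorphic_on ball 0 R2"
proof -
  have "ball 0 R2 \<subseteq> eball 0 (fps_conv_radius (Sf t))"
    using radius_Sf[OF t] by (auto intro: ereal_lt_le)
  thus ?thesis unfolding Sfun_def[abs_def] by (intro holomorphic_intros) auto
qed

lemma S_alpha_nz: assumes t: "norm t \<le> del1" shows "Sfun t (alpha t) \<noteq> 0"
proof
  assume S0: "Sfun t (alpha t) = 0"
  let ?a = "alpha t" and ?c = "inverse (alpha t)"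
  have anz: "?a \<noteq> 0" using alpha_norm(4)[OF t] .
  have ab: "?a \<in> ball 0 R2" using alpha_R(2)[OF t] by simp
  have hS: "(Sfun t has_field_derivative deriv (Sfun t) ?a) (at ?a)"
    by (rule holomorphic_derivI[OF Sfun_holo[OF t]]) (use ab in auto)
  have hL: "((\<lambda>x. 1 - ?c * x) has_field_derivative - ?c) (at ?a)"
    by (auto intro!: derivative_eq_intros)
  have "((\<lambda>x. Sfun t x * (1 - ?c * x)) has_field_derivative
          deriv (Sfun t) ?a * (1 - ?c * ?a) + (- ?c) * Sfun t ?a) (at ?a)"
    by (rule DERIV_mult[OF hS hL])
  hence "((\<lambda>x. Sfun t x * (1 - ?c * x)) has_field_derivative 0) (at ?a)"
    using S0 anz by simp
  hence "(Qfun t has_field_derivative 0) (at ?a)"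
  proof (rule has_field_derivative_transform_within_open[where S="ball 0 R2"])
    fix x :: complex assume "x \<in> ball 0 R2"
    thus "Sfun t x * (1 - ?c * x) = Qfun t x" using Sfun_Q[OF t] by simp
  qed (use ab in auto)
  hence "deriv (Qfun t) ?a = 0" by (rule DERIV_imp_deriv)
  moreover have "norm (deriv (Qfun t) ?a - dd) \<le> norm dd / 2" by (rule deriv_close[OF t alpha(1)[OF t]])
  ultimately show False using dd_norm by simp
qed

lemma Sfun_nz: assumes t: "norm t \<le> del1" and x: "norm x \<le> x0 + th" shows "Sfun t x \<noteq> 0"
proof (cases "x = alpha t")
  case True thus ?thesis using S_alpha_nz[OF t] by simp
next
  case False
  have xR: "norm x < R2" using x rho_bounds R_bounds by simp
  have "Qfun t x \<noteq> 0" using alpha_unique[OF t x] False by auto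
  thus ?thesis using Sfun_Q[OF t xR] by auto
qed

lemma Sfun_lower: assumes t: "norm t \<le> del1" and x: "norm x = rho" shows "norm (Sfun t x) \<ge> SL"
proof -
  let ?a = "alpha t"
  have anz: "?a \<noteq> 0" using alpha_norm(4)[OF t] .
  have xR: "norm x < R2" using x rho_bounds R_bounds by simp
  have xa: "norm (x - ?a) \<ge> th / 4"
    using alpha_norm(1)[OF t] x norm_triangle_sub[of x ?a] unfolding rho_def by simp
  have lowQ: "norm (Qfun t x) \<ge> min (m0 / 4) (th / 8)"
  proof (cases "x \<in> D")
    case True
    have "norm (Qfun t x) \<ge> norm dd / 2 * norm (x - ?a)" by (rule Q_lower_D[OF t True])
    moreover have "norm dd / 2 * norm (x - ?a) \<ge> 1/2 * (th / 4)"
      using dd_norm xa th(1) by (intro mult_mono) auto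
    ultimately show ?thesis by simp
  next
    case False
    have "norm x \<le> x0 + th" using x rho_bounds by simp
    thus ?thesis using region_t[OF t _ False] by simp
  qed
  have "1 - inverse ?a * x = (?a - x) / ?a" using anz by (simp add: field_simps)
  hence nl: "norm (1 - inverse ?a * x) = norm (?a - x) / norm ?a" by (simp add: norm_divide)
  have "norm (?a - x) \<le> 2 * R" using norm_triangle_ineq4[of ?a x] alpha_R(1)[OF t] x rho_bounds by simp
  hence nl2: "norm (1 - inverse ?a * x) \<le> 2 * R / (x0 / 2)"
    unfolding nl using alpha_norm(3)[OF t] x0_R2 R_bounds
    by (intro frac_le) auto
  have Qeq: "norm (Qfun t x) = norm (Sfun t x) * norm (1 - inverse ?a * x)"
    using Sfun_Q[OF t xR] norm_mult[of "Sfun t x" "1 - inverse ?a * x"] by simp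
  have pos: "2 * R / (x0 / 2) > 0" using R_bounds x0_R2 by simp
  have "min (m0 / 4) (th / 8) \<le> norm (Sfun t x) * (2 * R / (x0 / 2))"
    using lowQ Qeq mult_left_mono[OF nl2 norm_ge_zero[of "Sfun t x"]] by linarith
  hence "min (m0 / 4) (th / 8) / (2 * R / (x0 / 2)) \<le> norm (Sfun t x)"
    by (simp only: pos_divide_le_eq[OF pos])
  moreover have "min (m0 / 4) (th / 8) / (2 * R / (x0 / 2)) = SL"
    unfolding SL_def using R_bounds x0_R2 by (simp add: field_simps)
  ultimately show ?thesis by simp
qed

definition Tfun :: "complex \<Rightarrow> complex \<Rightarrow> complex" where "Tfun t x = (1 + Gfun t x) / Sfun t x"

lemma Tfun_holo: assumes t: "norm t \<le> del1" shows "Tfun t holomorphic_on ball 0 (x0 + th)"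
proof -
  have sub: "ball 0 (x0 + th) \<subseteq> ball (0::complex) R2" using rho_bounds R_bounds by auto
  show ?thesis unfolding Tfun_def[abs_def]
    using holomorphic_on_subset[OF Gfun_holo[OF tP(1)[OF t]] sub]
          holomorphic_on_subset[OF Sfun_holo[OF t] sub] Sfun_nz[OF t]
    by (intro holomorphic_intros) auto
qed

lemma Tfun_circle: assumes t: "norm t \<le> del1" and x: "norm x = rho" shows "norm (Tfun t x) \<le> MT"
proof -
  have xR: "norm x \<le> R" using x rho_bounds by simp
  have "norm (1 + Gfun t x) \<le> GB"
    unfolding GB_def using norm_triangle_ineq[of 1 "Gfun t x"] Gfun_bound[OF tP(1)[OF t] xR] by simp
  moreover have "norm (Sfun t x) \<ge> SL" by (rule Sfun_lower[OF t x])
  ultimately show ?thesis unfolding Tfun_def MT_def norm_divide using SL_pos GB_pos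
    by (intro frac_le) auto
qed

definition tau :: "complex \<Rightarrow> nat \<Rightarrow> complex" where "tau t n = (deriv ^^ n) (Tfun t) 0 / fact n"

lemma tau_bound: assumes t: "norm t \<le> del1" shows "norm (tau t n) \<le> MT / rho ^ n"
proof -
  have h: "Tfun t holomorphic_on ball 0 (x0 + th)" by (rule Tfun_holo[OF t])
  have "norm ((deriv ^^ n) (Tfun t) 0) \<le> fact n * MT / rho ^ n"
  proof (rule Cauchy_inequality)
    show "Tfun t holomorphic_on ball 0 rho" using h by (rule holomorphic_on_subset) (use rho_bounds in auto)
    show "continuous_on (cball 0 rho) (Tfun t)"
      using holomorphic_on_imp_continuous_on[OF h] by (rule continuous_on_subset) (use rho_bounds in auto)
    show "0 < rho" using rho_bounds by simp
    fix x :: complex assume "norm (0 - x) = rho"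
    thus "norm (Tfun t x) \<le> MT" using Tfun_circle[OF t] by simp
  qed
  thus ?thesis unfolding tau_def by (simp add: norm_divide field_simps)
qed

end

context S begin

lemma Qf0: "Qf t $ 0 = 1" unfolding Qf_def using r1 by (simp add: fps_X_power_mult_nth)

lemma T_S: assumes t: "norm t \<le> del1" shows "Abs_fps (tau t) * Sf t = 1 + Gf t"
proof -
  have fe: "fps_expansion (Tfun t) 0 = Abs_fps (tau t)" unfolding fps_expansion_def tau_def by simp
  have e1: "Tfun t has_fps_expansion Abs_fps (tau t)"
    unfolding fe[symmetric] using Tfun_holo[OF t] x0_R2 th(1)
    by (intro has_fps_expansion_fps_expansion[of "ball 0 (x0+th)"]) auto
  have "ereal 0 < fps_conv_radius (Sf t)" by (rule ereal_lt_le[OF R2_pos radius_Sf[OF t]])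
  hence rS: "fps_conv_radius (Sf t) > 0" by (simp add: zero_ereal_def)
  have e2: "Sfun t has_fps_expansion Sf t" unfolding Sfun_def[abs_def] using rS by (rule eval_fps_has_fps_expansion)
  have e3: "(\<lambda>x. Tfun t x * Sfun t x) has_fps_expansion Abs_fps (tau t) * Sf t"
    by (rule has_fps_expansion_mult[OF e1 e2])
  have "ereal 0 < fps_conv_radius (Gf t)" by (rule ereal_lt_le[OF R2_pos radius_Gf[OF tP(1)[OF t]]])
  hence rG: "fps_conv_radius (Gf t) > 0" by (simp add: zero_ereal_def)
  have e4: "(\<lambda>x. 1 + Gfun t x) has_fps_expansion 1 + Gf t"
    unfolding Gfun_def using has_fps_expansion_add[OF has_fps_expansion_1 eval_fps_has_fps_expansion[OF rG]] .
  have ev: "eventually (\<lambda>x. Tfun t x * Sfun t x = 1 + Gfun t x) (nhds 0)"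
  proof -
    have "eventually (\<lambda>x. x \<in> ball (0::complex) (x0+th)) (nhds 0)"
      using x0_R2 th(1) by (intro eventually_nhds_in_open) auto
    thus ?thesis
    proof (rule eventually_mono)
      fix x :: complex assume "x \<in> ball 0 (x0+th)"
      hence "Sfun t x \<noteq> 0" using Sfun_nz[OF t] by simp
      thus "Tfun t x * Sfun t x = 1 + Gfun t x" unfolding Tfun_def by simp
    qed
  qed
  have "(\<lambda>x. 1 + Gfun t x) has_fps_expansion Abs_fps (tau t) * Sf t"
    using has_fps_expansion_cong[OF ev refl] e3 by simp
  thus ?thesis using e4 by (rule fps_expansion_unique_complex)
qed

lemma U_rel: assumes t: "norm t \<le> del1"
  shows "Abs_fps (Fcoef q f t) = Abs_fps (tau t) * Geo t"
proof -
  define U where "U = Abs_fps (Fcoef q f t)"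
  define L where "L = 1 - fps_const (inverse (alpha t)) * fps_X"
  have id: "U = 1 + fps_X * U + fps_X^r * (Bf t * U) + Gf t"
    using fps_identity[of t] unfolding U_def Bf_def Gf_def .
  have UQ: "U * Qf t = 1 + Gf t"
  proof -
    have "U * Qf t = U - fps_X * U - fps_X^r * (Bf t * U)" unfolding Qf_def by (simp add: algebra_simps)
    also have "\<dots> = 1 + Gf t" using id by (simp add: algebra_simps)
    finally show ?thesis .
  qed
  have "(U * L) * Sf t = Abs_fps (tau t) * Sf t"
    using UQ T_S[OF t] Sf_Q[OF t] unfolding L_def by (simp add: mult_ac)
  moreover have "Sf t \<noteq> 0"
  proof
    assume "Sf t = 0"
    hence "Sf t $ 0 = 0" by simp
    thus False unfolding Sf_def Geo_def using Qf0 by simp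
  qed
  ultimately have UL: "U * L = Abs_fps (tau t)" by simp
  have "U = U * (L * Geo t)" using Geo_inv[OF t] unfolding L_def by (simp add: mult.commute)
  also have "\<dots> = Abs_fps (tau t) * Geo t" using UL by (simp add: mult.assoc)
  finally show ?thesis unfolding U_def .
qed

lemma Fcoef_tau: assumes t: "norm t \<le> del1"
  shows "Fcoef q f t k * alpha t ^ k = (\<Sum>i<k+1. tau t i * alpha t ^ i)"
proof -
  have anz: "alpha t \<noteq> 0" using alpha_norm(4)[OF t] .
  have "Fcoef q f t k = (\<Sum>i=0..k. tau t i * inverse (alpha t) ^ (k - i))"
    using arg_cong[OF U_rel[OF t], of "\<lambda>F. F $ k"] unfolding Geo_def by (simp add: fps_mult_nth)
  hence "Fcoef q f t k * alpha t ^ k = (\<Sum>i=0..k. tau t i * inverse (alpha t) ^ (k - i)) * alpha t ^ k"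
    by simp
  also have "\<dots> = (\<Sum>i=0..k. tau t i * (inverse (alpha t) ^ (k - i) * alpha t ^ k))"
    by (simp add: sum_distrib_right mult.assoc)
  also have "\<dots> = (\<Sum>i=0..k. tau t i * alpha t ^ i)"
  proof (rule sum.cong[OF refl])
    fix i assume "i \<in> {0..k}"
    hence "inverse (alpha t) ^ (k - i) * alpha t ^ k = alpha t ^ i"
      using anz by (simp add: power_diff field_simps power_inverse)
    thus "tau t i * (inverse (alpha t) ^ (k - i) * alpha t ^ k) = tau t i * alpha t ^ i" by simp
  qed
  also have "\<dots> = (\<Sum>i<k+1. tau t i * alpha t ^ i)" by (intro sum.cong) auto
  finally show ?thesis .
qed

definition kap :: "complex \<Rightarrow> complex" where "kap t = Tfun t (alpha t)"

lemma tau_sums: assumes t: "norm t \<le> del1" shows "(\<lambda>n. tau t n * alpha t ^ n) sums kap t"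
proof -
  have ab: "alpha t \<in> ball 0 (x0 + th)" using alpha_norm(1)[OF t] th(1) by simp
  have "(\<lambda>n. (deriv ^^ n) (Tfun t) 0 / fact n * (alpha t - 0) ^ n) sums Tfun t (alpha t)"
    by (rule holomorphic_power_series[OF Tfun_holo[OF t] ab])
  thus ?thesis unfolding kap_def tau_def by simp
qed

definition beta0 :: real where "beta0 = (x0 + th / 4) / rho"
definition CC :: real where "CC = 2 * SB * MT / (1 - beta0)"

lemma beta0: "0 < beta0" "beta0 < 1"
  unfolding beta0_def rho_def using x0_R2 th(1) by (auto simp: field_simps)

lemma SB_pos: "SB > 0" unfolding SB_def A1c_def using AA_pos R_bounds by simp
lemma MT_pos: "MT > 0" unfolding MT_def using GB_pos SL_pos by simp

lemma tail_bound: assumes t: "norm t \<le> del1"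
  shows "norm (\<Sum>j. tau t (j + (k+1)) * alpha t ^ (j + (k+1))) \<le> MT * beta0 ^ k / (1 - beta0)"
proof -
  let ?a = "alpha t"
  define b where "b = norm ?a / rho"
  have b0: "0 \<le> b" "b \<le> beta0" unfolding b_def beta0_def using alpha_norm(1)[OF t] rho_bounds
    by (auto intro: divide_right_mono)
  have cb: "norm (tau t (j + (k+1)) * ?a ^ (k+1)) \<le> (MT * b ^ (k+1)) * (1/rho) ^ j" for j
  proof -
    have tb: "norm (tau t (j + (k+1))) \<le> MT / rho ^ (j + (k+1))" by (rule tau_bound[OF t])
    have "norm (tau t (j + (k+1)) * ?a ^ (k+1)) \<le> MT / rho ^ (j + (k+1)) * norm ?a ^ (k+1)"
      unfolding norm_mult norm_power by (rule mult_right_mono[OF tb]) simp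
    also have "\<dots> = (MT * b ^ (k+1)) * (1/rho) ^ j" unfolding b_def
      by (simp add: power_add power_divide field_simps)
    finally show ?thesis .
  qed
  have g: "(1/rho) * norm ?a < 1" using b0 beta0 unfolding b_def by simp
  have "norm (\<Sum>j. (tau t (j + (k+1)) * ?a ^ (k+1)) * ?a ^ j) \<le> (MT * b ^ (k+1)) / (1 - (1/rho) * norm ?a)"
    by (rule powser_bound(2)[OF cb]) (use rho_bounds g in auto)
  moreover have "(\<lambda>j. (tau t (j + (k+1)) * ?a ^ (k+1)) * ?a ^ j) = (\<lambda>j. tau t (j + (k+1)) * ?a ^ (j + (k+1)))"
    by (simp add: power_add mult_ac)
  ultimately have "norm (\<Sum>j. tau t (j + (k+1)) * ?a ^ (j + (k+1))) \<le> (MT * b ^ (k+1)) / (1 - b)"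
    unfolding b_def by simp
  also have "\<dots> \<le> (MT * beta0 ^ k) / (1 - beta0)"
  proof (rule frac_le)
    have "b ^ (k+1) \<le> b ^ k" using b0 beta0 by (intro power_decreasing) auto
    also have "\<dots> \<le> beta0 ^ k" using b0 by (intro power_mono) auto
    finally show "MT * b ^ (k+1) \<le> MT * beta0 ^ k" using MT_pos by simp
  qed (use MT_pos beta0 b0 in auto)
  finally show ?thesis by simp
qed

lemma kap_lower: assumes t: "norm t \<le> del1" shows "norm (kap t) \<ge> 1 / (2 * SB)"
proof -
  have "norm (1 + Gfun t (alpha t)) \<ge> 1/2" by (rule onepG[OF t])
  moreover have "norm (Sfun t (alpha t)) \<le> SB" by (rule Sfun_bound[OF t alpha_R(1)[OF t]])
  moreover have "Sfun t (alpha t) \<noteq> 0" by (rule S_alpha_nz[OF t])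
  ultimately have "(1/2) / SB \<le> norm (1 + Gfun t (alpha t)) / norm (Sfun t (alpha t))"
    using SB_pos by (intro frac_le) auto
  thus ?thesis unfolding kap_def Tfun_def norm_divide by simp
qed

definition Rr :: "complex \<Rightarrow> nat \<Rightarrow> complex" where
  "Rr t k = - (\<Sum>j. tau t (j + (k+1)) * alpha t ^ (j + (k+1))) / kap t"

lemma asym: assumes t: "norm t \<le> del1"
  shows "Fcoef q f t k = kap t * inverse (alpha t) ^ k * (1 + Rr t k)"
    "norm (Rr t k) \<le> CC * beta0 ^ k"
proof -
  let ?a = "alpha t"
  have anz: "?a \<noteq> 0" using alpha_norm(4)[OF t] .
  have knz: "kap t \<noteq> 0" using kap_lower[OF t] SB_pos by auto
  have sm: "summable (\<lambda>n. tau t n * ?a ^ n)" using tau_sums[OF t] by (rule sums_summable)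
  have "kap t = (\<Sum>j. tau t (j + (k+1)) * ?a ^ (j + (k+1))) + (\<Sum>i<k+1. tau t i * ?a ^ i)"
    using suminf_split_initial_segment[OF sm, of "k+1"] sums_unique[OF tau_sums[OF t]] by simp
  hence "Fcoef q f t k * ?a ^ k = kap t * (1 + Rr t k)"
    unfolding Fcoef_tau[OF t] Rr_def using knz by (simp add: field_simps)
  thus "Fcoef q f t k = kap t * inverse ?a ^ k * (1 + Rr t k)"
    using anz by (simp add: field_simps power_inverse)
  have "norm (Rr t k) \<le> (MT * beta0 ^ k / (1 - beta0)) / (1 / (2 * SB))"
    unfolding Rr_def norm_divide norm_minus_cancel using tail_bound[OF t] kap_lower[OF t] SB_pos beta0 MT_pos
    by (intro frac_le) auto
  also have "\<dots> = CC * beta0 ^ k" unfolding CC_def by (simp add: field_simps)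
  finally show "norm (Rr t k) \<le> CC * beta0 ^ k" .
qed

lemma kap_upper: assumes t: "norm t \<le> del1" shows "norm (kap t) \<le> MT / (1 - beta0)"
proof -
  have "norm (kap t) = norm (\<Sum>n. tau t n * alpha t ^ n)" using sums_unique[OF tau_sums[OF t]] by simp
  also have "\<dots> \<le> MT / (1 - (1/rho) * norm (alpha t))"
  proof (rule powser_bound(2))
    show "norm (tau t k) \<le> MT * (1/rho) ^ k" for k using tau_bound[OF t] by (simp add: power_divide)
    show "(1/rho) * norm (alpha t) < 1" using alpha_norm(1)[OF t] rho_bounds th(1) unfolding rho_def by (simp add: field_simps)
  qed (use rho_bounds in auto)
  also have "\<dots> \<le> MT / (1 - beta0)"
  proof -
    have b: "(1/rho) * norm (alpha t) \<le> beta0" unfolding beta0_def using alpha_norm(1)[OF t] rho_bounds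
      by (simp add: divide_right_mono)
    hence p: "0 < 1 - (1/rho) * norm (alpha t)" using beta0 by simp
    show ?thesis
      by (rule divide_left_mono) (use b p MT_pos beta0 in auto)
  qed
  finally show ?thesis .
qed

end


lemma unif_lim_bound:
  fixes F :: "nat \<Rightarrow> complex \<Rightarrow> complex"
  assumes b: "\<And>k t. k \<ge> K \<Longrightarrow> t \<in> Sx \<Longrightarrow> norm (F k t - g t) \<le> B * bb ^ k"
    and bb: "0 \<le> bb" "bb < 1"
  shows "uniform_limit Sx F g sequentially"
proof (rule uniform_limitI)
  fix e :: real assume e: "e > 0"
  have "(\<lambda>k. B * bb ^ k) \<longlonglongrightarrow> B * 0" using bb by (intro tendsto_mult tendsto_const LIMSEQ_power_zero) auto
  hence "eventually (\<lambda>k. B * bb ^ k < e) sequentially" using e by (auto dest: order_tendstoD(2))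
  moreover have "eventually (\<lambda>k. k \<ge> K) sequentially" by (rule eventually_ge_at_top)
  ultimately show "eventually (\<lambda>k. \<forall>t\<in>Sx. dist (F k t) (g t) < e) sequentially"
  proof (rule eventually_elim2)
    fix k assume "B * bb ^ k < e" "k \<ge> K"
    thus "\<forall>t\<in>Sx. dist (F k t) (g t) < e" using b by (force simp: dist_norm)
  qed
qed

context S begin

lemma Fcoef_holo: "(\<lambda>t. Fcoef q f t k) holomorphic_on A"
  unfolding Fcoef_def fpow_def by (intro holomorphic_intros)

lemma K1_ex: "\<exists>K. CC * beta0 ^ K \<le> 1/4"
proof -
  have "(\<lambda>k. CC * beta0 ^ k) \<longlonglongrightarrow> CC * 0" using beta0 by (intro tendsto_mult tendsto_const LIMSEQ_power_zero) auto
  hence "eventually (\<lambda>k. CC * beta0 ^ k < 1/4) sequentially" by (intro order_tendstoD(2)) auto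
  then obtain N where "\<forall>k\<ge>N. CC * beta0 ^ k < 1/4" unfolding eventually_sequentially by blast
  thus ?thesis by (intro exI[of _ N]) auto
qed

definition K1 :: nat where "K1 = (SOME K. CC * beta0 ^ K \<le> 1/4)"

lemma K1: "k \<ge> K1 \<Longrightarrow> CC * beta0 ^ k \<le> 1/4"
proof -
  assume k: "k \<ge> K1"
  have "CC * beta0 ^ K1 \<le> 1/4" unfolding K1_def by (rule someI_ex[OF K1_ex])
  moreover have "beta0 ^ k \<le> beta0 ^ K1" using beta0 k by (intro power_decreasing) auto
  moreover have "CC \<ge> 0" unfolding CC_def using SB_pos MT_pos beta0 by simp
  ultimately show ?thesis using mult_left_mono[of "beta0 ^ k" "beta0 ^ K1" CC] by linarith
qed

lemma Rr_small: "norm t \<le> del1 \<Longrightarrow> k \<ge> K1 \<Longrightarrow> norm (Rr t k) \<le> 1/4"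
  using asym(2) K1 order_trans by blast

lemma Fcoef_nz: assumes t: "norm t \<le> del1" and k: "k \<ge> K1" shows "Fcoef q f t k \<noteq> 0"
proof -
  have "1 + Rr t k \<noteq> 0"
  proof
    assume "1 + Rr t k = 0"
    hence "Rr t k = -1" by (simp add: eq_neg_iff_add_eq_0 add.commute)
    thus False using Rr_small[OF t k] by simp
  qed
  moreover have "kap t \<noteq> 0" using kap_lower[OF t] SB_pos by auto
  moreover have "inverse (alpha t) ^ k \<noteq> 0" using alpha_norm(4)[OF t] by simp
  ultimately show ?thesis unfolding asym(1)[OF t] by simp
qed

lemma ratio_bound: assumes t: "norm t \<le> del1" and k: "k \<ge> K1"
  shows "norm (Fcoef q f t k / Fcoef q f t (Suc k) - alpha t) \<le> (8/3 * R * CC) * beta0 ^ k"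
proof -
  let ?a = "alpha t" and ?R0 = "Rr t k" and ?R1 = "Rr t (Suc k)"
  have anz: "?a \<noteq> 0" using alpha_norm(4)[OF t] .
  have knz: "kap t \<noteq> 0" using kap_lower[OF t] SB_pos by auto
  have r1: "norm ?R1 \<le> 1/4" using Rr_small[OF t] k by simp
  have nz1: "1 + ?R1 \<noteq> 0"
  proof
    assume "1 + ?R1 = 0"
    hence "?R1 = -1" by (simp add: eq_neg_iff_add_eq_0 add.commute)
    thus False using r1 by simp
  qed
  define X where "X = kap t * inverse ?a ^ k"
  have Xnz: "X \<noteq> 0" unfolding X_def using anz knz by simp
  have e0: "Fcoef q f t k = X * (1 + ?R0)" unfolding X_def asym(1)[OF t, of k] ..
  have e1: "Fcoef q f t (Suc k) = X * (inverse ?a * (1 + ?R1))"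
    unfolding X_def asym(1)[OF t, of "Suc k"] by (simp add: mult_ac)
  have "Fcoef q f t k / Fcoef q f t (Suc k) = (1 + ?R0) / (inverse ?a * (1 + ?R1))"
    unfolding e0 e1 using Xnz by simp
  also have "\<dots> = ?a * (1 + ?R0) / (1 + ?R1)" using anz nz1 by (simp add: field_simps)
  finally have "Fcoef q f t k / Fcoef q f t (Suc k) = ?a * (1 + ?R0) / (1 + ?R1)" .
  hence "Fcoef q f t k / Fcoef q f t (Suc k) - ?a = ?a * (?R0 - ?R1) / (1 + ?R1)"
    using nz1 by (simp add: field_simps)
  hence e: "norm (Fcoef q f t k / Fcoef q f t (Suc k) - ?a) = norm ?a * norm (?R0 - ?R1) / norm (1 + ?R1)"
    by (simp add: norm_mult norm_divide)
  have d: "norm (1 + ?R1) \<ge> 3/4" using norm_triangle_sub[of 1 "- ?R1"] r1 by simp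
  have "norm (?R0 - ?R1) \<le> CC * beta0 ^ k + CC * beta0 ^ Suc k"
    using norm_triangle_ineq4[of ?R0 ?R1] asym(2)[OF t, of k] asym(2)[OF t, of "Suc k"] by linarith
  also have "CC * beta0 ^ Suc k \<le> CC * beta0 ^ k"
    using beta0 SB_pos MT_pos unfolding CC_def by (intro mult_left_mono power_decreasing) auto
  finally have n: "norm (?R0 - ?R1) \<le> 2 * (CC * beta0 ^ k)" by simp
  have "norm ?a * norm (?R0 - ?R1) / norm (1 + ?R1) \<le> R * (2 * (CC * beta0 ^ k)) / (3/4)"
  proof -
    have "CC \<ge> 0" unfolding CC_def using SB_pos MT_pos beta0 by simp
    hence "0 \<le> R * (CC * beta0 ^ k)" using R_bounds beta0 by simp
    thus ?thesis using alpha_R(1)[OF t] n d R_bounds by (intro frac_le mult_mono) auto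
  qed
  also have "\<dots> = (8/3 * R * CC) * beta0 ^ k" by simp
  finally show ?thesis unfolding e .
qed

lemma alpha_holo: "alpha holomorphic_on ball 0 del1"
proof -
  define F where "F = (\<lambda>k t. Fcoef q f t k / Fcoef q f t (Suc k))"
  have ev: "eventually (\<lambda>k. continuous_on (cball 0 del1) (F k) \<and> F k holomorphic_on ball 0 del1) sequentially"
    using eventually_ge_at_top[of K1]
  proof (rule eventually_mono)
    fix k assume k: "k \<ge> K1"
    have "F k holomorphic_on cball 0 del1" unfolding F_def
      using Fcoef_nz k by (intro holomorphic_on_divide Fcoef_holo) auto
    thus "continuous_on (cball 0 del1) (F k) \<and> F k holomorphic_on ball 0 del1"
      using holomorphic_on_imp_continuous_on holomorphic_on_subset ball_subset_cball by blast
  qed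
  have ul: "uniform_limit (cball 0 del1) F alpha sequentially"
    by (rule unif_lim_bound[where K=K1 and B="8/3 * R * CC" and bb=beta0])
       (use ratio_bound beta0 in \<open>auto simp: F_def\<close>)
  from holomorphic_uniform_limit[OF ev ul] show ?thesis by auto
qed

lemma kap_holo: "kap holomorphic_on ball 0 (del1/2)"
proof -
  define F where "F = (\<lambda>k t. Fcoef q f t k * alpha t ^ k)"
  have hF: "F k holomorphic_on ball 0 del1" for k
    unfolding F_def using alpha_holo by (intro holomorphic_intros Fcoef_holo)
  have ev: "eventually (\<lambda>k. continuous_on (cball 0 (del1/2)) (F k) \<and> F k holomorphic_on ball 0 (del1/2)) sequentially"
  proof (rule always_eventually, intro allI conjI)
    fix k
    have sub: "cball 0 (del1/2) \<subseteq> ball (0::complex) del1" using del1_pos by auto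
    show "continuous_on (cball 0 (del1/2)) (F k)"
      using holomorphic_on_imp_continuous_on[OF hF] sub by (rule continuous_on_subset)
    show "F k holomorphic_on ball 0 (del1/2)" using hF by (rule holomorphic_on_subset) (use sub in auto)
  qed
  have b: "norm (F k t - kap t) \<le> (MT / (1 - beta0) * CC) * beta0 ^ k" if t: "t \<in> cball 0 (del1/2)" for k t
  proof -
    have tt: "norm t \<le> del1" using t del1_pos by simp
    have anz: "alpha t \<noteq> 0" using alpha_norm(4)[OF tt] .
    have "F k t - kap t = kap t * Rr t k" unfolding F_def asym(1)[OF tt, of k] using anz
      by (simp add: field_simps power_inverse)
    hence "norm (F k t - kap t) = norm (kap t) * norm (Rr t k)" by (simp add: norm_mult)
    also have "\<dots> \<le> MT / (1 - beta0) * (CC * beta0 ^ k)"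
      using kap_upper[OF tt] asym(2)[OF tt] MT_pos beta0 by (intro mult_mono) auto
    finally show ?thesis by simp
  qed
  have ul: "uniform_limit (cball 0 (del1/2)) F kap sequentially"
    by (rule unif_lim_bound[where K=0 and B="MT / (1 - beta0) * CC" and bb=beta0]) (use b beta0 in auto)
  from holomorphic_uniform_limit[OF ev ul] show ?thesis by auto
qed

end

context S begin

lemma main:
  "\<exists>\<delta> \<epsilon> :: real. \<delta> > 0 \<and> \<epsilon> > 0 \<and>
    (\<exists>\<alpha> \<kappa> :: complex \<Rightarrow> complex.
      \<alpha> analytic_on cball 0 \<delta> \<and> \<kappa> analytic_on cball 0 \<delta> \<and>
      (\<forall>t. norm t \<le> \<delta> \<longrightarrow> \<kappa> t \<noteq> 0) \<and>
      (\<forall>t. norm t \<le> \<delta> \<longrightarrow>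
         ereal (norm (\<alpha> t)) < conv_radius (Bcoef q r f t) \<and>
         \<alpha> t + \<alpha> t ^ r * Bfun q r f (\<alpha> t) t = 1 \<and>
         (\<forall>x. norm x \<le> (1 + \<epsilon>) * norm (\<alpha> t) \<and>
              summable (\<lambda>k. Bcoef q r f t k * x ^ k) \<and>
              x + x ^ r * Bfun q r f x t = 1 \<longrightarrow> x = \<alpha> t)) \<and>
      (\<exists>C K. \<forall>t k. norm t \<le> \<delta> \<and> k \<ge> K \<longrightarrow>
         (\<exists>R. Fcoef q f t k = \<kappa> t * inverse (\<alpha> t) ^ k * (1 + R) \<and>
              norm R \<le> C * inverse (1 + \<epsilon>) ^ k)))"
proof -
  define \<delta> where "\<delta> = del1 / 4"
  define \<epsilon> where "\<epsilon> = 1 / beta0 - 1"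
  have dpos: "\<delta> > 0" unfolding \<delta>_def using del1_pos by simp
  have epos: "\<epsilon> > 0" unfolding \<epsilon>_def using beta0 by (simp add: field_simps)
  have ie: "inverse (1 + \<epsilon>) = beta0" unfolding \<epsilon>_def using beta0 by simp
  have td: "\<And>t. norm t \<le> \<delta> \<Longrightarrow> norm t \<le> del1" unfolding \<delta>_def using del1_pos by simp
  have an1: "alpha analytic_on cball 0 \<delta>"
  proof -
    have "alpha analytic_on ball 0 del1" using alpha_holo by (simp add: analytic_on_open)
    thus ?thesis by (rule analytic_on_subset) (use del1_pos in \<open>auto simp: \<delta>_def\<close>)
  qed
  have an2: "kap analytic_on cball 0 \<delta>"
  proof -
    have "kap analytic_on ball 0 (del1/2)" using kap_holo by (simp add: analytic_on_open)
    thus ?thesis by (rule analytic_on_subset) (use del1_pos in \<open>auto simp: \<delta>_def\<close>)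
  qed
  have knz: "\<forall>t. norm t \<le> \<delta> \<longrightarrow> kap t \<noteq> 0"
    using kap_lower td SB_pos by fastforce
  have props: "ereal (norm (alpha t)) < conv_radius (Bcoef q r f t) \<and>
         alpha t + alpha t ^ r * Bfun q r f (alpha t) t = 1 \<and>
         (\<forall>x. norm x \<le> (1 + \<epsilon>) * norm (alpha t) \<and>
              summable (\<lambda>k. Bcoef q r f t k * x ^ k) \<and>
              x + x ^ r * Bfun q r f x t = 1 \<longrightarrow> x = alpha t)" if t: "norm t \<le> \<delta>" for t
  proof (intro conjI allI impI)
    have tt: "norm t \<le> del1" by (rule td[OF t])
    have "ereal R2 \<le> conv_radius (Bcoef q r f t)"
      using radius_Bf[OF tP(1)[OF tt]] unfolding Bf_def fps_conv_radius_def by simp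
    thus "ereal (norm (alpha t)) < conv_radius (Bcoef q r f t)"
      using alpha_R(2)[OF tt] by (rule ereal_lt_le[rotated])
    show "alpha t + alpha t ^ r * Bfun q r f (alpha t) t = 1"
      using alpha(2)[OF tt] unfolding Qfun_def by (simp add: algebra_simps)
    fix x assume h: "norm x \<le> (1 + \<epsilon>) * norm (alpha t) \<and>
              summable (\<lambda>k. Bcoef q r f t k * x ^ k) \<and> x + x ^ r * Bfun q r f x t = 1"
    have "(1 + \<epsilon>) * norm (alpha t) \<le> (1 + \<epsilon>) * (x0 + th / 4)"
      using alpha_norm(1)[OF tt] epos by (intro mult_left_mono) auto
    also have "(1 + \<epsilon>) * (x0 + th / 4) = rho" unfolding \<epsilon>_def beta0_def using x0_R2 th(1) rho_bounds
      by (simp add: field_simps)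
    finally have "norm x \<le> x0 + th" using h rho_bounds by simp
    moreover have "Qfun t x = 0" using h unfolding Qfun_def by (simp add: algebra_simps)
    ultimately show "x = alpha t" by (rule alpha_unique[OF tt])
  qed
  have as: "\<exists>C K. \<forall>t k. norm t \<le> \<delta> \<and> k \<ge> K \<longrightarrow>
         (\<exists>R. Fcoef q f t k = kap t * inverse (alpha t) ^ k * (1 + R) \<and>
              norm R \<le> C * inverse (1 + \<epsilon>) ^ k)"
    using asym td unfolding ie by blast
  show ?thesis
    using dpos epos an1 an2 knz props as by blast
qed

end

lemma growth:
  fixes q :: nat and f :: "nat \<Rightarrow> real" and c :: real
  assumes q: "q \<ge> 2" and fpos: "\<And>n. f n > 0" and c: "c \<ge> 0"
    and upper: "f \<in> O(\<lambda>n. real n powr c)" and lower: "f \<in> \<Omega>(\<lambda>n. real n powr (- c))"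
  shows "\<exists>a0 b0. a0 \<ge> 0 \<and> b0 \<ge> 0 \<and> (\<forall>k n. n < q^k \<longrightarrow> \<bar>ln (f n)\<bar> \<le> a0 + b0 * real k)"
proof -
  obtain C1 where C1: "C1 > 0" "eventually (\<lambda>n. norm (f n) \<le> C1 * norm (real n powr c)) at_top"
    using landau_o.bigE[OF upper] by blast
  obtain C2 where C2: "C2 > 0" "eventually (\<lambda>n. C2 * norm (real n powr (-c)) \<le> norm (f n)) at_top"
    using landau_omega.bigE[OF lower] by blast
  obtain N1 where N1: "\<And>n. n \<ge> N1 \<Longrightarrow> norm (f n) \<le> C1 * norm (real n powr c)"
    using C1(2) unfolding eventually_at_top_linorder by blast
  obtain N2 where N2: "\<And>n. n \<ge> N2 \<Longrightarrow> C2 * norm (real n powr (-c)) \<le> norm (f n)"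
    using C2(2) unfolding eventually_at_top_linorder by blast
  define N where "N = max (max N1 N2) 1"
  define M where "M = (\<Sum>n<N. \<bar>ln (f n)\<bar>)"
  define a0 where "a0 = M + \<bar>ln C1\<bar> + \<bar>ln C2\<bar>"
  define b0 where "b0 = c * ln (real q)"
  have M0: "M \<ge> 0" unfolding M_def by (simp add: sum_nonneg)
  have a0: "a0 \<ge> 0" unfolding a0_def using M0 by simp
  have b0: "b0 \<ge> 0" unfolding b0_def using c q by simp
  have "\<forall>k n. n < q^k \<longrightarrow> \<bar>ln (f n)\<bar> \<le> a0 + b0 * real k"
  proof (intro allI impI)
    fix k n assume nk: "n < q^k"
    have bk: "b0 * real k \<ge> 0" using b0 by simp
    show "\<bar>ln (f n)\<bar> \<le> a0 + b0 * real k"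
    proof (cases "n < N")
      case True
      have "\<bar>ln (f n)\<bar> \<le> M" unfolding M_def using True
        by (intro member_le_sum) auto
      thus ?thesis unfolding a0_def using bk by simp
    next
      case False
      hence n1: "n \<ge> N1" "n \<ge> N2" "n \<ge> 1" unfolding N_def by auto
      have npos: "real n > 0" using n1 by simp
      have lnn: "ln (real n) \<le> real k * ln (real q)"
      proof -
        have "real n < real q ^ k" using nk by (metis of_nat_less_iff of_nat_power)
        moreover have "real q ^ k > 0" using q by simp
        ultimately have "ln (real n) < ln (real q ^ k)" using npos by (subst ln_less_cancel_iff) auto
        also have "ln (real q ^ k) = real k * ln (real q)" using q by (simp add: ln_realpow)
        finally show ?thesis by simp
      qed
      have lnn0: "ln (real n) \<ge> 0" using n1 by simp
      have up: "f n \<le> C1 * real n powr c" using N1[OF n1(1)] fpos[of n] by simp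
      have lo: "C2 * real n powr (-c) \<le> f n" using N2[OF n1(2)] fpos[of n] by simp
      have "ln (f n) \<le> ln (C1 * real n powr c)" using up fpos[of n] C1(1) npos by simp
      also have "\<dots> = ln C1 + c * ln (real n)" using C1(1) npos by (simp add: ln_mult ln_powr)
      finally have u: "ln (f n) \<le> ln C1 + c * ln (real n)" .
      have "ln (C2 * real n powr (-c)) \<le> ln (f n)" using lo fpos[of n] C2(1) npos by simp
      moreover have "ln (C2 * real n powr (-c)) = ln C2 - c * ln (real n)" using C2(1) npos by (simp add: ln_mult ln_powr)
      ultimately have l: "ln C2 - c * ln (real n) \<le> ln (f n)" by simp
      have cl: "c * ln (real n) \<le> b0 * real k" unfolding b0_def using lnn c
        by (metis mult.assoc mult.commute mult_left_mono)
      have "c * ln (real n) \<ge> 0" using c lnn0 by simp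
      thus ?thesis using u l cl M0 unfolding a0_def by linarith
    qed
  qed
  thus ?thesis using a0 b0 by blast
qed

theorem lemma13:
  fixes q r :: nat and f :: "nat \<Rightarrow> real" and c :: real
  assumes q: "q \<ge> 2" and r: "r \<ge> 1"
    and fpos: "\<And>n. f n > 0"
    and qm: "quasimult q r f"
    and c: "c \<ge> 0"
    and upper: "f \<in> O(\<lambda>n. real n powr c)"
    and lower: "f \<in> \<Omega>(\<lambda>n. real n powr (- c))"
  shows "\<exists>\<delta> \<epsilon> :: real. \<delta> > 0 \<and> \<epsilon> > 0 \<and>
    (\<exists>\<alpha> \<kappa> :: complex \<Rightarrow> complex.
      \<alpha> analytic_on cball 0 \<delta> \<and> \<kappa> analytic_on cball 0 \<delta> \<and>
      (\<forall>t. norm t \<le> \<delta> \<longrightarrow> \<kappa> t \<noteq> 0) \<and>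
      (\<forall>t. norm t \<le> \<delta> \<longrightarrow>
         ereal (norm (\<alpha> t)) < conv_radius (Bcoef q r f t) \<and>
         \<alpha> t + \<alpha> t ^ r * Bfun q r f (\<alpha> t) t = 1 \<and>
         (\<forall>x. norm x \<le> (1 + \<epsilon>) * norm (\<alpha> t) \<and>
              summable (\<lambda>k. Bcoef q r f t k * x ^ k) \<and>
              x + x ^ r * Bfun q r f x t = 1 \<longrightarrow> x = \<alpha> t)) \<and>
      (\<exists>C K. \<forall>t k. norm t \<le> \<delta> \<and> k \<ge> K \<longrightarrow>
         (\<exists>R. Fcoef q f t k = \<kappa> t * inverse (\<alpha> t) ^ k * (1 + R) \<and>
              norm R \<le> C * inverse (1 + \<epsilon>) ^ k)))"
proof -
  obtain a0 b0 where ab: "a0 \<ge> 0" "b0 \<ge> 0" "\<forall>k n. n < q^k \<longrightarrow> \<bar>ln (f n)\<bar> \<le> a0 + b0 * real k"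
    using growth[OF q fpos c upper lower] by blast
  interpret S q r f a0 b0
    by unfold_locales (use q r fpos qm ab in auto)
  show ?thesis by (rule main)
qed


end
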